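(* Let $E=x_0^{d_1}\otimes\cdots\otimes x_0^{d_r}$, $n=n_1+\cdots+n_r$, and use the orthonormal basis of $T_E\mathbb X_{\mathbf n,\mathbf d}$ consisting of the tensors $e^{(i)}_k$ ($1\le i\le r$, $1\le k\le n_i$) obtained from $E$ by replacing the $i$-th factor $x_0^{d_i}$ by $\sqrt{d_i}\,x_0^{d_i-1}x_k$. Let $F\in N_E\mathbb X_{\mathbf n,\mathbf d}=\mathcal P\oplus\mathcal W\oplus\mathcal G$ be written $F=P+\sum_i W_i+\sum_{i<j}G_{i,j}$ with $P\in\mathcal P$, $W_i\in\mathcal W_i$, $G_{i,j}\in\mathcal G_{i,j}$, where $W_i$ is $E$ with the $i$-th factor replaced by $$f_i=\sum_{1\le k<\ell\le n_i}f_{i,(k,\ell)}\sqrt{d_i(d_i-1)}\,x_0^{d_i-2}x_kx_\ell+\sum_{1\le k\le n_i}f_{i,(k,k)}\sqrt{\tfrac{d_i(d_i-1)}{2}}\,x_0^{d_i-2}x_k^2$$ (set $f_{i,(\ell,k)}:=f_{i,(k,\ell)}$), and $G_{i,j}=\sum_{k=1}^{n_i}\sum_{\ell=1}^{n_j}g_{(i,j),(k,\ell)}\,E^{(i,j)}_{k,\ell}$, where $E^{(i,j)}_{k,\ell}$ is $E$ with the $i$-th factor replaced by $\sqrt{d_i}x_0^{d_i-1}x_k$ and the $j$-th factor replaced by $\sqrt{d_j}x_0^{d_j-1}x_\ell$. Then the Weingarten map $L_F$ of $\mathbb X_{\mathbf n,\mathbf d}$ at $E$ in direction $F$ is represented in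 this basis by the symmetric $n\times n$ block matrix with diagonal blocks $L_i$ and off-diagonal blocks $L_{i,j}$ (block $(j,i)$ equal to $L_{i,j}^T$), where $$L_i=\sqrt{\tfrac{d_i-1}{d_i}}\,\big(c_{k\ell}\,f_{i,(k,\ell)}\big)_{1\le k,\ell\le n_i},\quad c_{kk}=\sqrt2,\ c_{k\ell}=1\ (k\ne\ell),\qquad L_{i,j}=\big(g_{(i,j),(k,\ell)}\big)_{1\le k\le n_i,1\le \ell\le n_j}.$$ In particular $L_F$ depends only on the $\mathcal W$ and $\mathcal G$ components of $F$, and $L_F=0$ if $F\in\mathcal P$.
   Context: $H_{n,d}$: real homogeneous polynomials of degree $d$ in $x_0,\ldots,x_n$ with the Bombieri–Weyl inner product (scaled monomials $\mathbf m_\alpha=\sqrt{\binom d\alpha}x^\alpha$ orthonormal). $\mathbb V_{n,d}:=\{\pm\ell^d\}\cap\{\|f\|=1\}$; $\mathscr H_{\mathbf n,\mathbf d}:=H_{n_1,d_1}\otimes\cdots\otimes H_{n_r,d_r}$ with the inner product making all $\mathbf m_{\alpha_1}\otimes\cdots\otimes\mathbf m_{\alpha_r}$ orthonormal; $\mathbb X_{\mathbf n,\mathbf d}:=\{f_1\otimes\cdots\otimes f_r:f_i\in\mathbb V_{n_i,d_i}\}\subset$ unit sphere. With $(\alpha)_0:=\alpha_0$: $\mathcal W_i:=\operatorname{span}\{\mathbf m_{\alpha_1}\otimes\cdots\otimes\mathbf m_{\alpha_r}:(\alpha_i)_0=d_i-2,(\alpha_k)_0=d_k\ (k\ne i)\}$,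 $\mathcal G_{i,j}:=\operatorname{span}\{\mathbf m_{\alpha_1}\otimes\cdots\otimes\mathbf m_{\alpha_r}:(\alpha_i)_0=d_i-1,(\alpha_j)_0=d_j-1,(\alpha_k)_0=d_k\ (k\ne i,j)\}$ for $i<j$, $\mathcal W=\bigoplus\mathcal W_i$, $\mathcal G=\bigoplus_{i<j}\mathcal G_{i,j}$, $\mathcal P:=(\mathcal W\oplus\mathcal G)^\perp\cap N_E\mathbb X_{\mathbf n,\mathbf d}$; $N_E$ is the orthogonal complement of $T_E$ in $E^\perp$. The Weingarten map $L_F$ is defined by $\langle v,L_F(w)\rangle=\langle\partial v(u)/\partial w|_{u=E},F\rangle$ for tangent $v,w$ and any local tangent field $v(u)$ extending $v$. *)

theory Defs
  imports Complex_Main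
begin

text \<open>
A multi-index for a polynomial in x_0,...,x_n is a function
alpha :: nat => nat with alpha k = 0 for k > n (alpha k = exponent of x_k).
An element of H_{n,d} is represented by its coefficient function
c :: (nat => nat) => real in the ordinary monomial basis x^alpha (supported on
multi-indices of degree d).  Its Bombieri-Weyl coordinates are the coefficients
with respect to the scaled monomials m_alpha = sqrt(binom d alpha) x^alpha.
Factors of the tensor space are indexed by i in {1..r}.  An element of
H_{n_1,d_1} (x) ... (x) H_{n_r,d_r} is represented by its coordinates with
respect to the orthonormal basis m_{alpha_1} (x) ... (x) m_{alpha_r}, i.e. by a
function on tuples a :: nat => nat => nat (a i = alpha_i), vanishing off the
index set.
\<close>

definition MI :: "nat \<Rightarrow> nat \<Rightarrow> (nat \<Rightarrow> nat) set" where
  "MI n d = {\<alpha>. (\<Sum>k\<le>n. \<alpha> k) = d \<and> (\<forall>k>n. \<alpha> k = 0)}"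

definition multinom :: "nat \<Rightarrow> nat \<Rightarrow> (nat \<Rightarrow> nat) \<Rightarrow> real" where
  "multinom n d \<alpha> = fact d / (\<Prod>k\<le>n. fact (\<alpha> k))"

definition Hpoly :: "nat \<Rightarrow> nat \<Rightarrow> ((nat \<Rightarrow> nat) \<Rightarrow> real) \<Rightarrow> bool" where
  "Hpoly n d c \<longleftrightarrow> (\<forall>\<alpha>. \<alpha> \<notin> MI n d \<longrightarrow> c \<alpha> = 0)"

definition peval :: "nat \<Rightarrow> nat \<Rightarrow> ((nat \<Rightarrow> nat) \<Rightarrow> real) \<Rightarrow> (nat \<Rightarrow> real) \<Rightarrow> real" where
  "peval n d c x = (\<Sum>\<alpha>\<in>MI n d. c \<alpha> * (\<Prod>k\<le>n. x k ^ \<alpha> k))"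

definition bw :: "nat \<Rightarrow> nat \<Rightarrow> ((nat \<Rightarrow> nat) \<Rightarrow> real) \<Rightarrow> (nat \<Rightarrow> nat) \<Rightarrow> real" where
  "bw n d c \<alpha> = c \<alpha> / sqrt (multinom n d \<alpha>)"

definition Ver :: "nat \<Rightarrow> nat \<Rightarrow> ((nat \<Rightarrow> nat) \<Rightarrow> real) set" where
  "Ver n d = {c. Hpoly n d c \<and>
     (\<exists>s lf. (s = 1 \<or> s = -1) \<and> (\<forall>x. peval n d c x = s * (\<Sum>k\<le>n. lf k * x k) ^ d)) \<and>
     (\<Sum>\<alpha>\<in>MI n d. (bw n d c \<alpha>)\<^sup>2) = 1}"

definition tidx :: "nat \<Rightarrow> (nat \<Rightarrow> nat) \<Rightarrow> (nat \<Rightarrow> nat) \<Rightarrow> (nat \<Rightarrow> nat \<Rightarrow> nat) set" where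
  "tidx r n d = {a. (\<forall>i\<in>{1..r}. a i \<in> MI (n i) (d i)) \<and> (\<forall>i. i \<notin> {1..r} \<longrightarrow> a i = (\<lambda>_. 0))}"

type_synonym tvec = "(nat \<Rightarrow> nat \<Rightarrow> nat) \<Rightarrow> real"

definition hvec :: "nat \<Rightarrow> (nat \<Rightarrow> nat) \<Rightarrow> (nat \<Rightarrow> nat) \<Rightarrow> tvec \<Rightarrow> bool" where
  "hvec r n d v \<longleftrightarrow> (\<forall>a. a \<notin> tidx r n d \<longrightarrow> v a = 0)"

definition ip :: "nat \<Rightarrow> (nat \<Rightarrow> nat) \<Rightarrow> (nat \<Rightarrow> nat) \<Rightarrow> tvec \<Rightarrow> tvec \<Rightarrow> real" where
  "ip r n d u v = (\<Sum>a\<in>tidx r n d. u a * v a)"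

definition bvec :: "(nat \<Rightarrow> nat \<Rightarrow> nat) \<Rightarrow> tvec" where
  "bvec a = (\<lambda>b. if b = a then 1 else 0)"

definition tensor :: "nat \<Rightarrow> (nat \<Rightarrow> nat) \<Rightarrow> (nat \<Rightarrow> nat) \<Rightarrow>
    (nat \<Rightarrow> (nat \<Rightarrow> nat) \<Rightarrow> real) \<Rightarrow> tvec" where
  "tensor r n d fs = (\<lambda>a. if a \<in> tidx r n d then (\<Prod>i\<in>{1..r}. bw (n i) (d i) (fs i) (a i)) else 0)"

definition SV :: "nat \<Rightarrow> (nat \<Rightarrow> nat) \<Rightarrow> (nat \<Rightarrow> nat) \<Rightarrow> tvec set" where
  "SV r n d = {tensor r n d fs | fs. \<forall>i\<in>{1..r}. fs i \<in> Ver (n i) (d i)}"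

definition curve_deriv :: "nat \<Rightarrow> (nat \<Rightarrow> nat) \<Rightarrow> (nat \<Rightarrow> nat) \<Rightarrow> (real \<Rightarrow> tvec) \<Rightarrow> tvec \<Rightarrow> bool" where
  "curve_deriv r n d \<gamma> D \<longleftrightarrow> hvec r n d D \<and>
     (\<forall>a\<in>tidx r n d. ((\<lambda>t. \<gamma> t a) has_real_derivative D a) (at 0))"

definition tangent :: "nat \<Rightarrow> (nat \<Rightarrow> nat) \<Rightarrow> (nat \<Rightarrow> nat) \<Rightarrow> tvec \<Rightarrow> tvec set" where
  "tangent r n d p = {D. \<exists>\<gamma>. \<gamma> 0 = p \<and> (\<forall>\<^sub>F t in nhds 0. \<gamma> t \<in> SV r n d) \<and> curve_deriv r n d \<gamma> D}"

definition normal :: "nat \<Rightarrow> (nat \<Rightarrow> nat) \<Rightarrow> (nat \<Rightarrow> nat) \<Rightarrow> tvec \<Rightarrow> tvec set" where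
  "normal r n d p = {F. hvec r n d F \<and> ip r n d F p = 0 \<and> (\<forall>v\<in>tangent r n d p. ip r n d F v = 0)}"

text \<open>L is the Weingarten map of X at p in direction F:
  <v, L w> = <dv(u)/dw at u = p, F> for every local tangent field v(u) extending v,
  the derivative in direction w being taken along a curve in X with velocity w.\<close>
definition is_weingarten :: "nat \<Rightarrow> (nat \<Rightarrow> nat) \<Rightarrow> (nat \<Rightarrow> nat) \<Rightarrow> tvec \<Rightarrow> tvec \<Rightarrow> (tvec \<Rightarrow> tvec) \<Rightarrow> bool" where
  "is_weingarten r n d p F L \<longleftrightarrow>
     (\<forall>w\<in>tangent r n d p. L w \<in> tangent r n d p \<and>
        (\<forall>v\<in>tangent r n d p. \<forall>V \<gamma> D.
           \<gamma> 0 = p \<and> (\<forall>\<^sub>F t in nhds 0. \<gamma> t \<in> SV r n d) \<and> curve_deriv r n d \<gamma> w \<and>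
           V p = v \<and> (\<forall>\<^sub>F t in nhds 0. V (\<gamma> t) \<in> tangent r n d (\<gamma> t)) \<and>
           curve_deriv r n d (\<lambda>t. V (\<gamma> t)) D
           \<longrightarrow> ip r n d v (L w) = ip r n d D F))"

definition mono :: "(nat \<Rightarrow> nat) \<Rightarrow> (nat \<Rightarrow> nat) \<Rightarrow> real" where
  "mono \<alpha> = (\<lambda>\<beta>. if \<beta> = \<alpha> then 1 else 0)"

definition mi0 :: "nat \<Rightarrow> nat \<Rightarrow> nat" where
  "mi0 d = (\<lambda>m. if m = 0 then d else 0)"

definition mi1 :: "nat \<Rightarrow> nat \<Rightarrow> nat \<Rightarrow> nat" where
  "mi1 d k = (\<lambda>m. (if m = 0 then d - 1 else 0) + (if m = k then 1 else 0))"

definition mi2 :: "nat \<Rightarrow> nat \<Rightarrow> nat \<Rightarrow> nat \<Rightarrow> nat" where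
  "mi2 d k l = (\<lambda>m. (if m = 0 then d - 2 else 0) + (if m = k then 1 else 0) + (if m = l then 1 else 0))"

definition Epoint :: "nat \<Rightarrow> (nat \<Rightarrow> nat) \<Rightarrow> (nat \<Rightarrow> nat) \<Rightarrow> tvec" where
  "Epoint r n d = tensor r n d (\<lambda>j. mono (mi0 (d j)))"

definition tbasis :: "nat \<Rightarrow> (nat \<Rightarrow> nat) \<Rightarrow> (nat \<Rightarrow> nat) \<Rightarrow> nat \<Rightarrow> nat \<Rightarrow> tvec" where
  "tbasis r n d i k = tensor r n d (\<lambda>j. if j = i then (\<lambda>\<beta>. sqrt (real (d i)) * mono (mi1 (d i) k) \<beta>)
                                       else mono (mi0 (d j)))"

definition Wfac :: "nat \<Rightarrow> nat \<Rightarrow> (nat \<Rightarrow> nat \<Rightarrow> real) \<Rightarrow> (nat \<Rightarrow> nat) \<Rightarrow> real" where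
  "Wfac n d fi = (\<lambda>\<beta>.
     (\<Sum>k\<in>{1..n}. \<Sum>l\<in>{k<..n}. fi k l * sqrt (real d * (real d - 1)) * mono (mi2 d k l) \<beta>) +
     (\<Sum>k\<in>{1..n}. fi k k * sqrt (real d * (real d - 1) / 2) * mono (mi2 d k k) \<beta>))"

definition Wcomp :: "nat \<Rightarrow> (nat \<Rightarrow> nat) \<Rightarrow> (nat \<Rightarrow> nat) \<Rightarrow> (nat \<Rightarrow> nat \<Rightarrow> nat \<Rightarrow> real) \<Rightarrow> nat \<Rightarrow> tvec" where
  "Wcomp r n d f i = tensor r n d (\<lambda>j. if j = i then Wfac (n i) (d i) (f i) else mono (mi0 (d j)))"

definition Ebas :: "nat \<Rightarrow> (nat \<Rightarrow> nat) \<Rightarrow> (nat \<Rightarrow> nat) \<Rightarrow> nat \<Rightarrow> nat \<Rightarrow> nat \<Rightarrow> nat \<Rightarrow> tvec" where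
  "Ebas r n d i j k l = tensor r n d (\<lambda>m.
      if m = i then (\<lambda>\<beta>. sqrt (real (d i)) * mono (mi1 (d i) k) \<beta>)
      else if m = j then (\<lambda>\<beta>. sqrt (real (d j)) * mono (mi1 (d j) l) \<beta>)
      else mono (mi0 (d m)))"

definition Gcomp :: "nat \<Rightarrow> (nat \<Rightarrow> nat) \<Rightarrow> (nat \<Rightarrow> nat) \<Rightarrow> (nat \<Rightarrow> nat \<Rightarrow> nat \<Rightarrow> nat \<Rightarrow> real) \<Rightarrow> nat \<Rightarrow> nat \<Rightarrow> tvec" where
  "Gcomp r n d g i j = (\<lambda>a. \<Sum>k\<in>{1..n i}. \<Sum>l\<in>{1..n j}. g i j k l * Ebas r n d i j k l a)"

text \<open>index sets spanning W_i and G_{i,j}\<close>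
definition Windex :: "nat \<Rightarrow> (nat \<Rightarrow> nat) \<Rightarrow> (nat \<Rightarrow> nat) \<Rightarrow> nat \<Rightarrow> (nat \<Rightarrow> nat \<Rightarrow> nat) set" where
  "Windex r n d i = {a \<in> tidx r n d. a i 0 + 2 = d i \<and> (\<forall>m\<in>{1..r}. m \<noteq> i \<longrightarrow> a m 0 = d m)}"

definition Gindex :: "nat \<Rightarrow> (nat \<Rightarrow> nat) \<Rightarrow> (nat \<Rightarrow> nat) \<Rightarrow> nat \<Rightarrow> nat \<Rightarrow> (nat \<Rightarrow> nat \<Rightarrow> nat) set" where
  "Gindex r n d i j = {a \<in> tidx r n d. a i 0 + 1 = d i \<and> a j 0 + 1 = d j \<and>
       (\<forall>m\<in>{1..r}. m \<noteq> i \<and> m \<noteq> j \<longrightarrow> a m 0 = d m)}"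

definition Pspace :: "nat \<Rightarrow> (nat \<Rightarrow> nat) \<Rightarrow> (nat \<Rightarrow> nat) \<Rightarrow> tvec set" where
  "Pspace r n d = {P \<in> normal r n d (Epoint r n d).
     \<forall>a. ((\<exists>i\<in>{1..r}. a \<in> Windex r n d i) \<or> (\<exists>i\<in>{1..r}. \<exists>j\<in>{i<..r}. a \<in> Gindex r n d i j))
         \<longrightarrow> ip r n d P (bvec a) = 0}"

text \<open>entries of the claimed block matrix, rows indexed by (i,k), columns by (j,l)\<close>
definition Lmat :: "(nat \<Rightarrow> nat) \<Rightarrow> (nat \<Rightarrow> nat \<Rightarrow> nat \<Rightarrow> real) \<Rightarrow> (nat \<Rightarrow> nat \<Rightarrow> nat \<Rightarrow> nat \<Rightarrow> real) \<Rightarrow>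
     nat \<Rightarrow> nat \<Rightarrow> nat \<Rightarrow> nat \<Rightarrow> real" where
  "Lmat d f g i k j l =
     (if i = j then sqrt ((real (d i) - 1) / real (d i)) * (if k = l then sqrt 2 else 1) * f i k l
      else if i < j then g i j k l else g j i l k)"

end

theory Submission
  imports Defs "HOL-Library.FuncSet"
begin


definition pw :: "nat \<Rightarrow> (nat \<Rightarrow> real) \<Rightarrow> (nat \<Rightarrow> nat) \<Rightarrow> real" where
  "pw n l \<alpha> = (\<Prod>k\<le>n. l k ^ \<alpha> k)"

lemma MI_0: "MI 0 d = {mi0 d}"
  by (auto simp: MI_def mi0_def fun_eq_iff)

lemma MI_Suc: "MI (Suc n) d = (\<lambda>(j,\<beta>). \<beta>(Suc n := j)) ` (SIGMA j:{..d}. MI n (d-j))"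
proof (intro set_eqI iffI)
  fix \<alpha> assume a: "\<alpha> \<in> MI (Suc n) d"
  let ?j = "\<alpha> (Suc n)" and ?\<beta> = "\<alpha>(Suc n := 0)"
  have s: "(\<Sum>k\<le>Suc n. \<alpha> k) = d" using a by (simp add: MI_def)
  have s2: "(\<Sum>k\<le>n. ?\<beta> k) = (\<Sum>k\<le>n. \<alpha> k)" by (intro sum.cong) auto
  have "?j \<le> d" using s by simp
  moreover have "?\<beta> \<in> MI n (d - ?j)" using a s s2 by (auto simp: MI_def)
  moreover have "\<alpha> = ?\<beta>(Suc n := ?j)" by auto
  ultimately show "\<alpha> \<in> (\<lambda>(j,\<beta>). \<beta>(Suc n := j)) ` (SIGMA j:{..d}. MI n (d-j))"
    by (intro image_eqI[where x="(?j, ?\<beta>)"]) auto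
next
  fix \<alpha> assume "\<alpha> \<in> (\<lambda>(j,\<beta>). \<beta>(Suc n := j)) ` (SIGMA j:{..d}. MI n (d-j))"
  then obtain j \<beta> where j: "j \<le> d" and b: "\<beta> \<in> MI n (d - j)" and al: "\<alpha> = \<beta>(Suc n := j)" by auto
  have s2: "(\<Sum>k\<le>n. \<alpha> k) = (\<Sum>k\<le>n. \<beta> k)" using al by (intro sum.cong) auto
  show "\<alpha> \<in> MI (Suc n) d" using b j s2 al by (auto simp: MI_def)
qed

lemma MI_Suc_inj: "inj_on (\<lambda>(j,\<beta>). \<beta>(Suc n := j)) (SIGMA j:{..d}. MI n (d-j))"
proof (rule inj_onI, clarsimp)
  fix j \<beta> j' \<beta>' assume b: "\<beta> \<in> MI n (d - j)" "\<beta>' \<in> MI n (d - j')"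
    and e: "\<beta>(Suc n := j) = \<beta>'(Suc n := j')"
  have "j = j'" using fun_cong[OF e, of "Suc n"] by simp
  moreover have "\<beta> = \<beta>'"
  proof
    fix k show "\<beta> k = \<beta>' k"
      using fun_cong[OF e, of k] b by (cases "k = Suc n") (auto simp: MI_def)
  qed
  ultimately show "j = j' \<and> \<beta> = \<beta>'" by simp
qed

lemma finite_MI: "finite (MI n d)"
proof (induction n arbitrary: d)
  case 0 then show ?case by (simp add: MI_0)
next
  case (Suc n) then show ?case by (simp add: MI_Suc)
qed

lemma sum_MI_Suc:
  "(\<Sum>\<alpha>\<in>MI (Suc n) d. g \<alpha>) = (\<Sum>j\<le>d. \<Sum>\<beta>\<in>MI n (d-j). g (\<beta>(Suc n := j)))"
proof -
  have "(\<Sum>\<alpha>\<in>MI (Suc n) d. g \<alpha>) = (\<Sum>x\<in>(SIGMA j:{..d}. MI n (d-j)). g ((\<lambda>(j,\<beta>). \<beta>(Suc n := j)) x))"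
    unfolding MI_Suc by (rule sum.reindex[OF MI_Suc_inj, unfolded comp_def])
  also have "\<dots> = (\<Sum>(j,\<beta>)\<in>(SIGMA j:{..d}. MI n (d-j)). g (\<beta>(Suc n := j)))"
    by (simp add: case_prod_unfold)
  also have "\<dots> = (\<Sum>j\<le>d. \<Sum>\<beta>\<in>MI n (d-j). g (\<beta>(Suc n := j)))"
    by (rule sum.Sigma[symmetric]) (auto simp: finite_MI)
  finally show ?thesis .
qed

lemma pw_upd_Suc: "\<beta> \<in> MI n e \<Longrightarrow> pw (Suc n) y (\<beta>(Suc n := j)) = pw n y \<beta> * y (Suc n) ^ j"
  unfolding pw_def by (simp add: atMost_Suc)

lemma pw_upd_Suc': "pw n (y(Suc n := t)) \<beta> = pw n y \<beta>"
  unfolding pw_def by (intro prod.cong) auto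

lemma multinom_pos: "multinom n d \<alpha> > 0"
  unfolding multinom_def by (intro divide_pos_pos prod_pos) auto

lemma multinom_upd_Suc:
  assumes "\<beta> \<in> MI n (d - j)" "j \<le> d"
  shows "multinom (Suc n) d (\<beta>(Suc n := j)) = real (d choose j) * multinom n (d - j) \<beta>"
proof -
  have p: "(\<Prod>k\<le>Suc n. fact ((\<beta>(Suc n := j)) k)) = (\<Prod>k\<le>n. fact (\<beta> k)) * (fact j :: real)"
    by (simp add: atMost_Suc)
  have f: "fact j * fact (d - j) * real (d choose j) = fact d"
    using binomial_fact_lemma[OF assms(2)] by (metis of_nat_fact of_nat_mult)
  have "(\<Prod>k\<le>n. fact (\<beta> k)) > (0::real)" by (intro prod_pos) auto
  then show ?thesis unfolding multinom_def p using f
    by (simp add: field_simps)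
qed

theorem multinomial:
  "(\<Sum>k\<le>n. y k) ^ d = (\<Sum>\<alpha>\<in>MI n d. multinom n d \<alpha> * pw n y \<alpha>)"
proof (induction n arbitrary: d)
  case 0
  show ?case by (simp add: MI_0 multinom_def pw_def mi0_def)
next
  case (Suc n)
  have "(\<Sum>k\<le>Suc n. y k) ^ d = (y (Suc n) + (\<Sum>k\<le>n. y k)) ^ d" by (simp add: add.commute)
  also have "\<dots> = (\<Sum>j\<le>d. real (d choose j) * y (Suc n) ^ j * (\<Sum>k\<le>n. y k) ^ (d - j))"
    by (rule binomial_ring)
  also have "\<dots> = (\<Sum>j\<le>d. \<Sum>\<beta>\<in>MI n (d-j). multinom (Suc n) d (\<beta>(Suc n := j)) * pw (Suc n) y (\<beta>(Suc n := j)))"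
    by (intro sum.cong refl) (simp add: Suc.IH sum_distrib_left multinom_upd_Suc pw_upd_Suc mult_ac)
  also have "\<dots> = (\<Sum>\<alpha>\<in>MI (Suc n) d. multinom (Suc n) d \<alpha> * pw (Suc n) y \<alpha>)"
    by (rule sum_MI_Suc[symmetric])
  finally show ?case .
qed

theorem coeff_unique:
  assumes "\<And>x. (\<Sum>\<alpha>\<in>MI n d. h \<alpha> * pw n x \<alpha>) = 0" "\<alpha> \<in> MI n d"
  shows "h \<alpha> = 0"
  using assms
proof (induction n arbitrary: d h \<alpha>)
  case 0
  from 0(1)[of "\<lambda>_. 1"] 0(2) show ?case by (simp add: MI_0 pw_def)
next
  case (Suc n)
  obtain j \<beta> where j: "j \<le> d" and b: "\<beta> \<in> MI n (d - j)" and al: "\<alpha> = \<beta>(Suc n := j)"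
    using Suc.prems(2) unfolding MI_Suc by auto
  have "\<forall>i\<le>d. (\<Sum>\<beta>\<in>MI n (d-i). h (\<beta>(Suc n := i)) * pw n x \<beta>) = 0" for x
  proof -
    have "\<forall>t. (\<Sum>i\<le>d. (\<Sum>\<beta>\<in>MI n (d-i). h (\<beta>(Suc n := i)) * pw n x \<beta>) * t ^ i) = 0"
    proof
      fix t
      have "0 = (\<Sum>\<alpha>\<in>MI (Suc n) d. h \<alpha> * pw (Suc n) (x(Suc n := t)) \<alpha>)" using Suc.prems(1) by simp
      also have "\<dots> = (\<Sum>i\<le>d. (\<Sum>\<beta>\<in>MI n (d-i). h (\<beta>(Suc n := i)) * pw n x \<beta>) * t ^ i)"
        unfolding sum_MI_Suc
        by (intro sum.cong refl) (simp add: sum_distrib_left sum_distrib_right pw_upd_Suc pw_upd_Suc' mult_ac)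
      finally show "(\<Sum>i\<le>d. (\<Sum>\<beta>\<in>MI n (d-i). h (\<beta>(Suc n := i)) * pw n x \<beta>) * t ^ i) = 0" by simp
    qed
    then show ?thesis using polyfun_eq_0[of "\<lambda>i. \<Sum>\<beta>\<in>MI n (d-i). h (\<beta>(Suc n := i)) * pw n x \<beta>" d]
      by (simp add: mult.commute)
  qed
  then have "\<And>x. (\<Sum>\<beta>\<in>MI n (d-j). h (\<beta>(Suc n := j)) * pw n x \<beta>) = 0" using j by blast
  from Suc.IH[OF this b] show ?case using al by simp
qed


definition canon :: "nat \<Rightarrow> nat \<Rightarrow> real \<Rightarrow> (nat \<Rightarrow> real) \<Rightarrow> (nat \<Rightarrow> nat) \<Rightarrow> real" where
  "canon n d \<sigma> l = (\<lambda>\<alpha>. if \<alpha> \<in> MI n d then \<sigma> * multinom n d \<alpha> * pw n l \<alpha> else 0)"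

definition Qc :: "nat \<Rightarrow> nat \<Rightarrow> real \<Rightarrow> (nat \<Rightarrow> real) \<Rightarrow> (nat \<Rightarrow> nat) \<Rightarrow> real" where
  "Qc n d \<sigma> l \<alpha> = \<sigma> * sqrt (multinom n d \<alpha>) * pw n l \<alpha>"

lemma bw_canon: "\<alpha> \<in> MI n d \<Longrightarrow> bw n d (canon n d \<sigma> l) \<alpha> = Qc n d \<sigma> l \<alpha>"
proof -
  assume "\<alpha> \<in> MI n d"
  moreover have "sqrt (multinom n d \<alpha>) > 0" using multinom_pos by simp
  moreover have "multinom n d \<alpha> = sqrt (multinom n d \<alpha>) * sqrt (multinom n d \<alpha>)"
    using multinom_pos[of n d \<alpha>] by simp
  ultimately show ?thesis unfolding bw_def canon_def Qc_def
    by (simp add: field_simps)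
qed

lemma pw_mult: "pw n l \<alpha> * pw n x \<alpha> = pw n (\<lambda>k. l k * x k) \<alpha>"
  unfolding pw_def by (simp add: prod.distrib[symmetric] power_mult_distrib)

lemma pw_sq: "(pw n l \<alpha>)\<^sup>2 = pw n (\<lambda>k. (l k)\<^sup>2) \<alpha>"
  unfolding pw_def prod_power_distrib by (intro prod.cong refl) (simp add: power_mult[symmetric] mult.commute)

lemma Qc_sq: "\<sigma> = 1 \<or> \<sigma> = -1 \<Longrightarrow> (Qc n d \<sigma> l \<alpha>)\<^sup>2 = multinom n d \<alpha> * pw n (\<lambda>k. (l k)\<^sup>2) \<alpha>"
  using multinom_pos[of n d \<alpha>] unfolding Qc_def
  by (auto simp: power_mult_distrib pw_sq)

lemma norm_canon: "\<sigma> = 1 \<or> \<sigma> = -1 \<Longrightarrow>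
   (\<Sum>\<alpha>\<in>MI n d. (bw n d (canon n d \<sigma> l) \<alpha>)\<^sup>2) = (\<Sum>k\<le>n. (l k)\<^sup>2) ^ d"
  by (simp add: bw_canon Qc_sq multinomial)

lemma peval_canon: "peval n d (canon n d \<sigma> l) x = \<sigma> * (\<Sum>k\<le>n. l k * x k) ^ d"
  unfolding peval_def multinomial pw_def[symmetric]
  by (simp add: canon_def sum_distrib_left pw_mult[symmetric] mult_ac)

lemma canon_Ver:
  assumes "\<sigma> = 1 \<or> \<sigma> = -1" "(\<Sum>k\<le>n. (l k)\<^sup>2) ^ d = 1"
  shows "canon n d \<sigma> l \<in> Ver n d"
proof -
  have "Hpoly n d (canon n d \<sigma> l)" by (simp add: Hpoly_def canon_def)
  moreover have "\<forall>x. peval n d (canon n d \<sigma> l) x = \<sigma> * (\<Sum>k\<le>n. l k * x k) ^ d"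
    by (simp add: peval_canon)
  moreover have "(\<Sum>\<alpha>\<in>MI n d. (bw n d (canon n d \<sigma> l) \<alpha>)\<^sup>2) = 1"
    using norm_canon[OF assms(1)] assms(2) by simp
  ultimately show ?thesis unfolding Ver_def using assms(1) by blast
qed

lemma Ver_canon:
  assumes "c \<in> Ver n d"
  shows "\<exists>\<sigma> l. (\<sigma> = 1 \<or> \<sigma> = -1) \<and> (\<Sum>k\<le>n. (l k)\<^sup>2) ^ d = 1 \<and> c = canon n d \<sigma> l"
proof -
  obtain s lf where s: "s = 1 \<or> s = -1" and pe: "\<And>x. peval n d c x = s * (\<Sum>k\<le>n. lf k * x k) ^ d"
    and hp: "Hpoly n d c" and nm: "(\<Sum>\<alpha>\<in>MI n d. (bw n d c \<alpha>)\<^sup>2) = 1"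
    using assms unfolding Ver_def by blast
  have eq: "c = canon n d s lf"
  proof
    fix \<alpha> show "c \<alpha> = canon n d s lf \<alpha>"
    proof (cases "\<alpha> \<in> MI n d")
      case True
      have "\<And>x. (\<Sum>\<beta>\<in>MI n d. (c \<beta> - canon n d s lf \<beta>) * pw n x \<beta>) = 0"
        using pe peval_canon[of n d s lf] unfolding peval_def
        by (simp add: left_diff_distrib sum_subtractf pw_def)
      from coeff_unique[OF this True] show ?thesis by simp
    next
      case False then show ?thesis using hp by (simp add: Hpoly_def canon_def)
    qed
  qed
  have "(\<Sum>k\<le>n. (lf k)\<^sup>2) ^ d = 1" using nm norm_canon[OF s, of n d lf] eq by simp
  then show ?thesis using s eq by blast
qed

definition CT :: "nat \<Rightarrow> (nat \<Rightarrow> nat) \<Rightarrow> (nat \<Rightarrow> nat) \<Rightarrow> (nat \<Rightarrow> real) \<Rightarrow> (nat \<Rightarrow> nat \<Rightarrow> real) \<Rightarrow> tvec" where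
  "CT r n d \<sigma> l = tensor r n d (\<lambda>j. canon (n j) (d j) (\<sigma> j) (l j))"

definition okp :: "nat \<Rightarrow> (nat \<Rightarrow> nat) \<Rightarrow> (nat \<Rightarrow> nat) \<Rightarrow> (nat \<Rightarrow> real) \<Rightarrow> (nat \<Rightarrow> nat \<Rightarrow> real) \<Rightarrow> bool" where
  "okp r n d \<sigma> l \<longleftrightarrow> (\<forall>j\<in>{1..r}. (\<sigma> j = 1 \<or> \<sigma> j = -1) \<and> (\<Sum>k\<le>n j. (l j k)\<^sup>2) ^ d j = 1)"

lemma CT_apply: "CT r n d \<sigma> l a = (if a \<in> tidx r n d then (\<Prod>j\<in>{1..r}. Qc (n j) (d j) (\<sigma> j) (l j) (a j)) else 0)"
  unfolding CT_def tensor_def by (auto simp: tidx_def bw_canon intro!: prod.cong)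

lemma tensor_cong: "(\<And>j. j \<in> {1..r} \<Longrightarrow> fs j = gs j) \<Longrightarrow> tensor r n d fs = tensor r n d gs"
  unfolding tensor_def by (auto intro!: prod.cong ext)

lemma CT_SV: "okp r n d \<sigma> l \<Longrightarrow> CT r n d \<sigma> l \<in> SV r n d"
proof -
  assume a: "okp r n d \<sigma> l"
  have "\<forall>i\<in>{1..r}. canon (n i) (d i) (\<sigma> i) (l i) \<in> Ver (n i) (d i)"
    using a unfolding okp_def by (blast intro: canon_Ver)
  then show ?thesis unfolding SV_def CT_def by blast
qed

lemma SV_CT:
  assumes "q \<in> SV r n d"
  shows "\<exists>\<sigma> l. okp r n d \<sigma> l \<and> q = CT r n d \<sigma> l"
proof -
  obtain fs where fs: "\<forall>i\<in>{1..r}. fs i \<in> Ver (n i) (d i)" and q: "q = tensor r n d fs"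
    using assms unfolding SV_def by blast
  have h: "\<forall>i\<in>{1..r}. \<exists>s. \<exists>l. (s = 1 \<or> s = -1) \<and> (\<Sum>k\<le>n i. (l k)\<^sup>2) ^ d i = 1
     \<and> fs i = canon (n i) (d i) s l"
  proof
    fix i assume "i \<in> {1..r}"
    then have "fs i \<in> Ver (n i) (d i)" using fs by blast
    from Ver_canon[OF this] show "\<exists>s. \<exists>l. (s = 1 \<or> s = -1) \<and> (\<Sum>k\<le>n i. (l k)\<^sup>2) ^ d i = 1
     \<and> fs i = canon (n i) (d i) s l" .
  qed
  obtain \<sigma> where h2: "\<forall>i\<in>{1..r}. \<exists>l. (\<sigma> i = 1 \<or> \<sigma> i = -1) \<and> (\<Sum>k\<le>n i. (l k)\<^sup>2) ^ d i = 1
     \<and> fs i = canon (n i) (d i) (\<sigma> i) l"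
    using bchoice[OF h] by blast
  obtain l where h3: "\<forall>i\<in>{1..r}. (\<sigma> i = 1 \<or> \<sigma> i = -1) \<and> (\<Sum>k\<le>n i. (l i k)\<^sup>2) ^ d i = 1
     \<and> fs i = canon (n i) (d i) (\<sigma> i) (l i)"
    using bchoice[OF h2] by blast
  have "okp r n d \<sigma> l" using h3 unfolding okp_def by blast
  moreover have "q = CT r n d \<sigma> l" unfolding CT_def q
    by (rule tensor_cong) (use h3 in blast)
  ultimately show ?thesis by blast
qed


lemma prod_split2:
  fixes h :: "nat \<Rightarrow> 'a::comm_monoid_mult"
  assumes "k \<noteq> 0" "k \<le> n"
  shows "(\<Prod>m\<le>n. h m) = h 0 * h k * (\<Prod>m\<in>{..n}-{0,k}. h m)"
proof -
  have e: "{..n} = insert 0 (insert k ({..n}-{0,k}))" using assms by auto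
  have "prod h {..n} = prod h (insert 0 (insert k ({..n}-{0,k})))" using e by (rule arg_cong)
  also have "\<dots> = h 0 * (prod h (insert k ({..n}-{0,k})))"
    by (rule prod.insert) (use assms in auto)
  also have "prod h (insert k ({..n}-{0,k})) = h k * prod h ({..n}-{0,k})"
    by (rule prod.insert) auto
  finally show ?thesis by (simp add: mult.assoc)
qed

lemma sum_split2:
  fixes h :: "nat \<Rightarrow> 'a::comm_monoid_add"
  assumes "k \<noteq> 0" "k \<le> n"
  shows "(\<Sum>m\<le>n. h m) = h 0 + h k + (\<Sum>m\<in>{..n}-{0,k}. h m)"
proof -
  have e: "{..n} = insert 0 (insert k ({..n}-{0,k}))" using assms by auto
  have "sum h {..n} = sum h (insert 0 (insert k ({..n}-{0,k})))" using e by (rule arg_cong)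
  also have "\<dots> = h 0 + (sum h (insert k ({..n}-{0,k})))"
    by (rule sum.insert) (use assms in auto)
  also have "sum h (insert k ({..n}-{0,k})) = h k + sum h ({..n}-{0,k})"
    by (rule sum.insert) auto
  finally show ?thesis by (simp add: add.assoc)
qed

definition dnf :: "(nat \<Rightarrow> nat) \<Rightarrow> nat \<Rightarrow> nat \<Rightarrow> nat" where
  "dnf \<alpha> k = \<alpha>(0 := \<alpha> 0 + 1, k := \<alpha> k - 1)"

definition upf :: "(nat \<Rightarrow> nat) \<Rightarrow> nat \<Rightarrow> nat \<Rightarrow> nat" where
  "upf \<alpha> k = \<alpha>(0 := \<alpha> 0 - 1, k := \<alpha> k + 1)"

lemma mi0_MI: "mi0 d \<in> MI n d"
  by (simp add: MI_def mi0_def sum.delta)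

lemma mi1_MI: "1 \<le> d \<Longrightarrow> k \<in> {1..n} \<Longrightarrow> mi1 d k \<in> MI n d"
  unfolding MI_def mi1_def by (auto simp: sum.distrib sum.delta)

lemma mi2_MI: "2 \<le> d \<Longrightarrow> k \<in> {1..n} \<Longrightarrow> l \<in> {1..n} \<Longrightarrow> mi2 d k l \<in> MI n d"
  unfolding MI_def mi2_def by (auto simp: sum.distrib sum.delta)

lemma dnf_MI:
  assumes "\<alpha> \<in> MI n d" "k \<in> {1..n}" "1 \<le> \<alpha> k"
  shows "dnf \<alpha> k \<in> MI n d"
proof -
  have k: "k \<noteq> 0" "k \<le> n" using assms by auto
  have "(\<Sum>m\<le>n. dnf \<alpha> k m) = (\<Sum>m\<le>n. \<alpha> m)"
    unfolding sum_split2[OF k, of "dnf \<alpha> k"] sum_split2[OF k, of \<alpha>] using assms(3) k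
    by (simp add: dnf_def)
  then show ?thesis using assms k by (auto simp: MI_def dnf_def)
qed

lemma upf_MI:
  assumes "\<alpha> \<in> MI n d" "k \<in> {1..n}" "1 \<le> \<alpha> 0"
  shows "upf \<alpha> k \<in> MI n d"
proof -
  have k: "k \<noteq> 0" "k \<le> n" using assms by auto
  have "(\<Sum>m\<le>n. upf \<alpha> k m) = (\<Sum>m\<le>n. \<alpha> m)"
    unfolding sum_split2[OF k, of "upf \<alpha> k"] sum_split2[OF k, of \<alpha>] using assms(3) k
    by (simp add: upf_def)
  then show ?thesis using assms k by (auto simp: MI_def upf_def)
qed

lemma multinom_dnf:
  assumes "k \<in> {1..n}" "1 \<le> \<alpha> k"
  shows "multinom n d \<alpha> * \<alpha> k = multinom n d (dnf \<alpha> k) * (\<alpha> 0 + 1)"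
proof -
  have k: "k \<noteq> 0" "k \<le> n" using assms by auto
  let ?R = "(\<Prod>m\<in>{..n}-{0,k}. fact (\<alpha> m)) :: real"
  have p1: "(\<Prod>m\<le>n. fact (\<alpha> m)) = fact (\<alpha> 0) * fact (\<alpha> k) * ?R"
    by (rule prod_split2[OF k])
  have p2: "(\<Prod>m\<le>n. fact (dnf \<alpha> k m)) = fact (\<alpha> 0 + 1) * fact (\<alpha> k - 1) * ?R"
    unfolding prod_split2[OF k, of "\<lambda>m. fact (dnf \<alpha> k m)"] using k
    by (simp add: dnf_def)
  have R: "?R > 0" by (intro prod_pos) auto
  have f1: "fact (\<alpha> k) = real (\<alpha> k) * fact (\<alpha> k - 1)"
    using assms(2) by (simp add: fact_reduce)
  have f2: "fact (\<alpha> 0 + 1) = real (\<alpha> 0 + 1) * (fact (\<alpha> 0) :: real)" by simp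
  have pos: "fact (\<alpha> 0) > (0::real)" "fact (\<alpha> k - 1) > (0::real)" by auto
  define X where "X = fact (\<alpha> 0) * fact (\<alpha> k - 1) * ?R"
  have X: "X > 0" unfolding X_def using R pos by simp
  have ak: "real (\<alpha> k) > 0" using assms(2) by simp
  have "multinom n d \<alpha> = fact d / (real (\<alpha> k) * X)" unfolding multinom_def p1 f1 X_def by (simp add: mult_ac)
  moreover have "multinom n d (dnf \<alpha> k) = fact d / (real (\<alpha> 0 + 1) * X)" unfolding multinom_def p2 f2 X_def by (simp add: mult_ac)
  ultimately show ?thesis using X ak by simp
qed

lemma dnf_upf: "k \<noteq> 0 \<Longrightarrow> 1 \<le> \<alpha> 0 \<Longrightarrow> dnf (upf \<alpha> k) k = \<alpha>"
  by (auto simp: dnf_def upf_def fun_eq_iff)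

lemma multinom_upf:
  assumes "k \<in> {1..n}" "1 \<le> \<alpha> 0"
  shows "multinom n d \<alpha> * \<alpha> 0 = multinom n d (upf \<alpha> k) * (\<alpha> k + 1)"
proof -
  have k: "k \<noteq> 0" using assms by auto
  have "multinom n d (upf \<alpha> k) * upf \<alpha> k k = multinom n d (dnf (upf \<alpha> k) k) * (upf \<alpha> k 0 + 1)"
    by (rule multinom_dnf) (use assms k in \<open>auto simp: upf_def\<close>)
  moreover have "dnf (upf \<alpha> k) k = \<alpha>" by (rule dnf_upf) (use k assms(2) in auto)
  moreover have "upf \<alpha> k k = \<alpha> k + 1" "upf \<alpha> k 0 + 1 = \<alpha> 0" using k assms(2) by (auto simp: upf_def)
  ultimately show ?thesis by (simp add: mult_ac)
qed

lemma pw_dnf: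
  assumes "k \<in> {1..n}" "1 \<le> \<alpha> k"
  shows "pw n l (dnf \<alpha> k) * l k = pw n l \<alpha> * l 0"
proof -
  have k: "k \<noteq> 0" "k \<le> n" using assms by auto
  have e: "l k ^ (\<alpha> k - 1) * l k = l k ^ \<alpha> k" using assms(2)
    by (metis Suc_diff_le diff_Suc_1 power_Suc2)
  show ?thesis unfolding pw_def prod_split2[OF k, of "\<lambda>m. l m ^ dnf \<alpha> k m"] prod_split2[OF k, of "\<lambda>m. l m ^ \<alpha> m"]
    using k e by (simp add: dnf_def mult_ac)
qed

lemma pw_upf:
  assumes "k \<in> {1..n}" "1 \<le> \<alpha> 0"
  shows "pw n l (upf \<alpha> k) * l 0 = pw n l \<alpha> * l k"
proof -
  have k: "k \<noteq> 0" "k \<le> n" using assms by auto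
  have e: "l 0 ^ (\<alpha> 0 - 1) * l 0 = l 0 ^ \<alpha> 0" using assms(2)
    by (metis Suc_diff_le diff_Suc_1 power_Suc2)
  show ?thesis unfolding pw_def prod_split2[OF k, of "\<lambda>m. l m ^ upf \<alpha> k m"] prod_split2[OF k, of "\<lambda>m. l m ^ \<alpha> m"]
    using k e by (simp add: upf_def mult_ac)
qed

lemma prod_delta_one: "finite S \<Longrightarrow> (\<And>m. m \<in> S \<Longrightarrow> m \<noteq> 0 \<Longrightarrow> h m = 1) \<Longrightarrow> 0 \<in> S \<Longrightarrow> prod h S = h 0"
  by (subst prod.remove[of S 0]) (auto intro!: prod.neutral)

lemma pw_mi0: "pw n l (mi0 d) = l 0 ^ d"
  unfolding pw_def by (subst prod_delta_one) (auto simp: mi0_def)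

lemma pw_mi1: "k \<in> {1..n} \<Longrightarrow> pw n l (mi1 d k) = l 0 ^ (d - 1) * l k"
  unfolding pw_def by (subst prod_split2[of k n]) (auto simp: mi1_def intro!: prod.neutral)

lemma multinom_mi0: "multinom n d (mi0 d) = 1"
  unfolding multinom_def by (subst prod_delta_one) (auto simp: mi0_def)

lemma multinom_mi1: "1 \<le> d \<Longrightarrow> k \<in> {1..n} \<Longrightarrow> multinom n d (mi1 d k) = d"
proof -
  assume a: "1 \<le> d" "k \<in> {1..n}"
  have "(\<Prod>m\<le>n. fact (mi1 d k m)) = (fact (d - 1) :: real)"
    by (subst prod_split2[of k n]) (use a in \<open>auto simp: mi1_def intro!: prod.neutral\<close>)
  moreover have "(fact d :: real) = d * fact (d - 1)" using a by (simp add: fact_reduce)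
  ultimately show ?thesis unfolding multinom_def by simp
qed

lemma multinom_mi2:
  assumes "2 \<le> d" "k \<in> {1..n}" "l \<in> {1..n}"
  shows "multinom n d (mi2 d k l) = (if k = l then real d * (real d - 1) / 2 else real d * (real d - 1))"
proof -
  have fd: "(fact d :: real) = real d * (real d - 1) * fact (d - 2)"
  proof -
    obtain e where e: "d = Suc (Suc e)" using assms(1) by (metis add_2_eq_Suc le_Suc_ex)
    show ?thesis unfolding e by (simp add: algebra_simps)
  qed
  have fp: "fact (d - 2) > (0::real)" by simp
  show ?thesis
  proof (cases "k = l")
    case True
    have "(\<Prod>m\<le>n. fact (mi2 d k l m)) = (fact (d - 2) * 2 :: real)"
      by (subst prod_split2[of k n]) (use assms True in \<open>auto simp: mi2_def intro!: prod.neutral\<close>)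
    then show ?thesis unfolding multinom_def fd using True fp by simp
  next
    case False
    have "{..n} = insert l ({..n} - {l})" using assms by auto
    have "(\<Prod>m\<le>n. fact (mi2 d k l m)) = (fact (d - 2) :: real)"
    proof (subst prod_split2[of k n])
      show "(fact (mi2 d k l 0) * fact (mi2 d k l k) * (\<Prod>m\<in>{..n} - {0, k}. fact (mi2 d k l m))) = (fact (d - 2) :: real)"
      proof -
        have "(\<Prod>m\<in>{..n} - {0, k}. fact (mi2 d k l m)) = (fact (mi2 d k l l) :: real) * (\<Prod>m\<in>{..n} - {0, k} - {l}. fact (mi2 d k l m))"
          by (subst prod.remove[of _ l]) (use assms False in auto)
        also have "\<dots> = 1" using assms False by (auto simp: mi2_def intro!: prod.neutral)
        finally show ?thesis using assms False by (simp add: mi2_def)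
      qed
    qed (use assms in auto)
    then show ?thesis unfolding multinom_def fd using False fp by simp
  qed
qed


locale SVL =
  fixes r :: nat and n d :: "nat \<Rightarrow> nat"
  assumes nd: "\<And>i. i \<in> {1..r} \<Longrightarrow> 1 \<le> n i \<and> 1 \<le> d i"
begin

abbreviation "T \<equiv> tidx r n d"

definition a0 :: "nat \<Rightarrow> nat \<Rightarrow> nat" where
  "a0 = (\<lambda>i. if i \<in> {1..r} then mi0 (d i) else (\<lambda>_. 0))"
definition ee :: "nat \<Rightarrow> nat \<Rightarrow> nat \<Rightarrow> nat \<Rightarrow> nat" where
  "ee i k = a0(i := mi1 (d i) k)"
definition dn :: "(nat \<Rightarrow> nat \<Rightarrow> nat) \<Rightarrow> nat \<Rightarrow> nat \<Rightarrow> nat \<Rightarrow> nat \<Rightarrow> nat" where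
  "dn a i k = a(i := dnf (a i) k)"
definition up :: "(nat \<Rightarrow> nat \<Rightarrow> nat) \<Rightarrow> nat \<Rightarrow> nat \<Rightarrow> nat \<Rightarrow> nat \<Rightarrow> nat" where
  "up a i k = a(i := upf (a i) k)"
definition ext :: "(nat \<Rightarrow> nat \<Rightarrow> nat) \<Rightarrow> nat \<Rightarrow> nat \<Rightarrow> nat" where
  "ext g = (\<lambda>i. if i \<in> {1..r} then g i else (\<lambda>_. 0))"

lemma T_ext: "(\<forall>i\<in>{1..r}. g i \<in> MI (n i) (d i)) \<Longrightarrow> ext g \<in> T"
  by (auto simp: tidx_def ext_def)

lemma T_sub: "T \<subseteq> ext ` PiE {1..r} (\<lambda>i. MI (n i) (d i))"
proof
  fix a assume a: "a \<in> T"
  have "a = ext (restrict a {1..r})" using a by (auto simp: tidx_def ext_def fun_eq_iff)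
  moreover have "restrict a {1..r} \<in> PiE {1..r} (\<lambda>i. MI (n i) (d i))" using a by (auto simp: tidx_def)
  ultimately show "a \<in> ext ` PiE {1..r} (\<lambda>i. MI (n i) (d i))" by blast
qed

lemma finite_T: "finite T"
  by (rule finite_subset[OF T_sub]) (auto intro: finite_PiE finite_MI)

lemma sum_T_prod:
  fixes h :: "nat \<Rightarrow> (nat \<Rightarrow> nat) \<Rightarrow> real"
  shows "(\<Sum>a\<in>T. \<Prod>i\<in>{1..r}. h i (a i)) = (\<Prod>i\<in>{1..r}. \<Sum>\<beta>\<in>MI (n i) (d i). h i \<beta>)"
proof -
  have "(\<Prod>i\<in>{1..r}. \<Sum>\<beta>\<in>MI (n i) (d i). h i \<beta>) = (\<Sum>g\<in>PiE {1..r} (\<lambda>i. MI (n i) (d i)). \<Prod>i\<in>{1..r}. h i (g i))"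
    by (rule prod_sum_PiE[where f=h]) (auto simp: finite_MI)
  also have "\<dots> = (\<Sum>a\<in>T. \<Prod>i\<in>{1..r}. h i (a i))"
  proof (rule sum.reindex_bij_witness[where j = ext and i = "\<lambda>a. restrict a {1..r}"])
    fix g assume g: "g \<in> PiE {1..r} (\<lambda>i. MI (n i) (d i))"
    show "restrict (ext g) {1..r} = g" using g by (auto simp: ext_def fun_eq_iff PiE_def extensional_def)
    show "ext g \<in> T" using g by (intro T_ext) auto
    show "(\<Prod>i\<in>{1..r}. h i (ext g i)) = (\<Prod>i\<in>{1..r}. h i (g i))" by (intro prod.cong) (auto simp: ext_def)
  next
    fix a assume a: "a \<in> T"
    show "ext (restrict a {1..r}) = a" using a by (auto simp: tidx_def ext_def fun_eq_iff)
    show "restrict a {1..r} \<in> PiE {1..r} (\<lambda>i. MI (n i) (d i))" using a by (auto simp: tidx_def)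
  qed
  finally show ?thesis ..
qed

lemma a0_T: "a0 \<in> T"
  unfolding a0_def by (auto simp: tidx_def mi0_MI)

lemma ee_T: "i \<in> {1..r} \<Longrightarrow> k \<in> {1..n i} \<Longrightarrow> ee i k \<in> T"
  unfolding ee_def using a0_T nd by (auto simp: tidx_def mi1_MI)

lemma ee_ne_a0: "i \<in> {1..r} \<Longrightarrow> k \<in> {1..n i} \<Longrightarrow> ee i k \<noteq> a0"
proof
  assume "i \<in> {1..r}" "k \<in> {1..n i}" "ee i k = a0"
  then have "ee i k i k = a0 i k" by simp
  then show False using \<open>i \<in> {1..r}\<close> \<open>k \<in> {1..n i}\<close> by (simp add: ee_def a0_def mi1_def mi0_def)
qed

lemma ee_inj:
  assumes "i \<in> {1..r}" "k \<in> {1..n i}" "j \<in> {1..r}" "l \<in> {1..n j}"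
  shows "ee i k = ee j l \<longleftrightarrow> i = j \<and> k = l"
proof
  assume e: "ee i k = ee j l"
  have e2: "ee i k i k = ee j l i k" using e by simp
  have k0: "k \<noteq> 0" using assms by simp
  have lhs: "ee i k i k = 1" using k0 by (simp add: ee_def mi1_def)
  show "i = j \<and> k = l"
  proof (cases "i = j")
    case True
    have "ee j l i k = (if k = l then 1 else 0)" using True k0 by (simp add: ee_def mi1_def)
    then have "k = l" using e2 lhs by (cases "k = l") auto
    then show ?thesis using True by simp
  next
    case False
    have "ee j l i k = 0" using False k0 assms(1) by (simp add: ee_def a0_def mi0_def)
    then show ?thesis using e2 lhs by simp
  qed
qed simp

lemma dn_T: "a \<in> T \<Longrightarrow> i \<in> {1..r} \<Longrightarrow> k \<in> {1..n i} \<Longrightarrow> 1 \<le> a i k \<Longrightarrow> dn a i k \<in> T"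
  unfolding dn_def by (auto simp: tidx_def intro!: dnf_MI)

lemma up_T: "a \<in> T \<Longrightarrow> i \<in> {1..r} \<Longrightarrow> k \<in> {1..n i} \<Longrightarrow> 1 \<le> a i 0 \<Longrightarrow> up a i k \<in> T"
  unfolding up_def by (auto simp: tidx_def intro!: upf_MI)

lemma up_ne_a0: "i \<in> {1..r} \<Longrightarrow> k \<in> {1..n i} \<Longrightarrow> up a i k \<noteq> a0"
proof
  assume "i \<in> {1..r}" "k \<in> {1..n i}" "up a i k = a0"
  then have "up a i k i k = a0 i k" by simp
  then show False using \<open>i \<in> {1..r}\<close> \<open>k \<in> {1..n i}\<close> by (simp add: up_def upf_def a0_def mi0_def)
qed

lemma dn_a0:
  assumes a: "a \<in> T" and i: "i \<in> {1..r}" and k: "k \<in> {1..n i}" and p: "1 \<le> a i k" and e: "dn a i k = a0"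
  shows "a = ee i k"
proof
  fix j show "a j = ee i k j"
  proof (cases "j = i")
    case False
    then show ?thesis using fun_cong[OF e, of j] by (simp add: dn_def ee_def)
  next
    case True
    have ai: "dnf (a i) k = mi0 (d i)" using fun_cong[OF e, of i] i by (simp add: dn_def a0_def)
    have MI: "a i \<in> MI (n i) (d i)" using a i by (simp add: tidx_def)
    show ?thesis
    proof
      fix m
      have k0: "k \<noteq> 0" using k by simp
      have c0: "a i 0 + 1 = d i" using fun_cong[OF ai, of 0] k0 by (simp add: dnf_def mi0_def)
      have ck: "a i k = 1" using fun_cong[OF ai, of k] k0 p by (simp add: dnf_def mi0_def)
      have cm: "m \<noteq> 0 \<Longrightarrow> m \<noteq> k \<Longrightarrow> a i m = 0" using fun_cong[OF ai, of m] by (simp add: dnf_def mi0_def)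
      show "a j m = ee i k j m" using True c0 ck cm k0
        by (cases "m = 0"; cases "m = k") (auto simp: ee_def mi1_def)
    qed
  qed
qed

lemma exists_pos:
  assumes a: "a \<in> T" and ne: "a \<noteq> a0"
  shows "\<exists>i\<in>{1..r}. \<exists>k\<in>{1..n i}. 1 \<le> a i k"
proof (rule ccontr)
  assume c: "\<not> ?thesis"
  have "a = a0"
  proof
    fix i show "a i = a0 i"
    proof (cases "i \<in> {1..r}")
      case False then show ?thesis using a by (auto simp: tidx_def a0_def)
    next
      case True
      have MI: "a i \<in> MI (n i) (d i)" using a True by (simp add: tidx_def)
      have z: "a i m = 0" if m: "m \<noteq> 0" for m
      proof (cases "m \<le> n i")
        case True
        then have "m \<in> {1..n i}" using m by simp
        then have "\<not> 1 \<le> a i m" using c \<open>i \<in> {1..r}\<close> by blast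
        then show ?thesis by simp
      next
        case False then show ?thesis using MI by (simp add: MI_def)
      qed
      have "(\<Sum>m\<le>n i. a i m) = a i 0" by (subst sum.remove[of _ 0]) (auto simp: z)
      then have "a i 0 = d i" using MI by (simp add: MI_def)
      then show ?thesis using True z by (auto simp: a0_def mi0_def fun_eq_iff)
    qed
  qed
  then show False using ne by simp
qed

definition EE :: "(nat \<Rightarrow> nat \<Rightarrow> nat) set" where
  "EE = {ee i k | i k. i \<in> {1..r} \<and> k \<in> {1..n i}}"

lemma high_pos:
  assumes a: "a \<in> T" "a \<noteq> a0" "a \<notin> EE"
  shows "\<exists>i\<in>{1..r}. \<exists>k\<in>{1..n i}. 1 \<le> a i k \<and> dn a i k \<noteq> a0"
proof -
  obtain i k where ik: "i \<in> {1..r}" "k \<in> {1..n i}" "1 \<le> a i k" using exists_pos[OF a(1,2)] by blast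
  have "dn a i k \<noteq> a0"
  proof
    assume "dn a i k = a0"
    then have "a = ee i k" using dn_a0[OF a(1) ik] by simp
    then show False using a(3) ik unfolding EE_def by blast
  qed
  then show ?thesis using ik by blast
qed

lemma tensor_split:
  assumes "i \<in> {1..r}"
  shows "tensor r n d fs a = (if a \<in> T then bw (n i) (d i) (fs i) (a i) * (\<Prod>j\<in>{1..r}-{i}. bw (n j) (d j) (fs j) (a j)) else 0)"
  unfolding tensor_def using assms by (simp add: prod.remove)

lemma bw_mono: "\<beta> \<in> MI n' d' \<Longrightarrow> bw n' d' (mono \<mu>) \<beta> = (if \<beta> = \<mu> then 1 / sqrt (multinom n' d' \<mu>) else 0)"
  by (simp add: bw_def mono_def)

lemma bw_mono0: "\<beta> \<in> MI n' d' \<Longrightarrow> bw n' d' (mono (mi0 d')) \<beta> = (if \<beta> = mi0 d' then 1 else 0)"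
  by (simp add: bw_mono multinom_mi0)

lemma prod_ind: "finite S \<Longrightarrow> (\<Prod>j\<in>S. if P j then (1::real) else 0) = (if \<forall>j\<in>S. P j then 1 else 0)"
  by (induction S rule: finite_induct) auto

lemma Epoint_eq: "Epoint r n d = (\<lambda>a. if a = a0 then 1 else 0)"
proof
  fix a
  show "Epoint r n d a = (if a = a0 then 1 else 0)"
  proof (cases "a \<in> T")
    case True
    have "Epoint r n d a = (\<Prod>j\<in>{1..r}. if a j = mi0 (d j) then 1 else 0)"
      unfolding Epoint_def tensor_def using True by (auto simp: tidx_def bw_mono0 intro!: prod.cong)
    also have "\<dots> = (if a = a0 then 1 else 0)"
      using True by (subst prod_ind) (auto simp: a0_def tidx_def fun_eq_iff)
    finally show ?thesis .
  next
    case False then show ?thesis using a0_T by (auto simp: Epoint_def tensor_def)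
  qed
qed

lemma tbasis_eq:
  assumes i: "i \<in> {1..r}" and k: "k \<in> {1..n i}"
  shows "tbasis r n d i k = (\<lambda>a. if a = ee i k then 1 else 0)"
proof
  fix a
  show "tbasis r n d i k a = (if a = ee i k then 1 else 0)"
  proof (cases "a \<in> T")
    case True
    have d1: "1 \<le> d i" using nd i by simp
    have bi: "bw (n i) (d i) (\<lambda>\<beta>. sqrt (real (d i)) * mono (mi1 (d i) k) \<beta>) (a i) = (if a i = mi1 (d i) k then 1 else 0)"
      using d1 k by (simp add: bw_def mono_def multinom_mi1)
    have "tbasis r n d i k a = (if a i = mi1 (d i) k then 1 else 0) * (\<Prod>j\<in>{1..r}-{i}. if a j = mi0 (d j) then 1 else 0)"
      unfolding tbasis_def tensor_split[OF i] using True bi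
      by (auto simp: tidx_def bw_mono0 intro!: prod.cong)
    also have "\<dots> = (if a = ee i k then 1 else 0)"
      using True i by (subst prod_ind) (auto simp: ee_def a0_def tidx_def fun_eq_iff)
    finally show ?thesis .
  next
    case False then show ?thesis using ee_T[OF i k] by (auto simp: tbasis_def tensor_def)
  qed
qed

definition gidx :: "nat \<Rightarrow> nat \<Rightarrow> nat \<Rightarrow> nat \<Rightarrow> nat \<Rightarrow> nat \<Rightarrow> nat" where
  "gidx i j k l = a0(i := mi1 (d i) k, j := mi1 (d j) l)"

definition widx :: "nat \<Rightarrow> nat \<Rightarrow> nat \<Rightarrow> nat \<Rightarrow> nat \<Rightarrow> nat" where
  "widx i k l = a0(i := mi2 (d i) k l)"

lemma Ebas_eq:
  assumes i: "i \<in> {1..r}" and j: "j \<in> {1..r}" and ij: "i \<noteq> j" and k: "k \<in> {1..n i}" and l: "l \<in> {1..n j}"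
  shows "Ebas r n d i j k l = (\<lambda>a. if a = gidx i j k l then 1 else 0)"
proof
  fix a
  have d1: "1 \<le> d i" "1 \<le> d j" using nd i j by auto
  have gT: "gidx i j k l \<in> T" using a0_T i j k l d1 by (auto simp: gidx_def tidx_def mi1_MI)
  show "Ebas r n d i j k l a = (if a = gidx i j k l then 1 else 0)"
  proof (cases "a \<in> T")
    case True
    have "Ebas r n d i j k l a = (\<Prod>m\<in>{1..r}. if a m = gidx i j k l m then 1 else 0)"
      unfolding Ebas_def tensor_def using True ij d1 k l
      by (auto simp: tidx_def bw_mono0 bw_def mono_def multinom_mi1 multinom_mi0 gidx_def a0_def intro!: prod.cong)
    also have "\<dots> = (if a = gidx i j k l then 1 else 0)"
      using True gT by (subst prod_ind) (auto simp: tidx_def fun_eq_iff)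
    finally show ?thesis .
  next
    case False then show ?thesis using gT by (auto simp: Ebas_def tensor_def)
  qed
qed

lemma ip_delta: "x \<in> T \<Longrightarrow> ip r n d D (\<lambda>a. if a = x then 1 else 0) = D x"
proof -
  assume x: "x \<in> T"
  have "(\<Sum>a\<in>T. D a * (if a = x then 1 else 0)) = (\<Sum>a\<in>T. if a = x then D a else 0)" by (rule sum.cong) auto
  then show ?thesis unfolding ip_def using finite_T x by (simp add: sum.delta)
qed

lemma ip_delta': "x \<in> T \<Longrightarrow> ip r n d (\<lambda>a. if a = x then 1 else 0) D = D x"
proof -
  assume x: "x \<in> T"
  have "(\<Sum>a\<in>T. (if a = x then 1 else 0) * D a) = (\<Sum>a\<in>T. if a = x then D a else 0)" by (rule sum.cong) auto
  then show ?thesis unfolding ip_def using finite_T x by (simp add: sum.delta)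
qed

end


lemma deriv_ev_zero:
  assumes "(f has_real_derivative f') (at 0)" "eventually (\<lambda>t. f t = 0) (nhds 0)"
  shows "f' = 0"
proof -
  have "((\<lambda>_. 0::real) has_real_derivative f') (at 0)"
    using assms(1) DERIV_cong_ev[OF refl assms(2) refl] by simp
  then show ?thesis using DERIV_const DERIV_unique by blast
qed

lemma prod_ind': "finite S \<Longrightarrow> (\<Prod>j\<in>S. if P j then (1::real) else 0) = (if \<forall>j\<in>S. P j then 1 else 0)"
  by (induction S rule: finite_induct) auto

lemma sum_delta0_sq: "(\<Sum>k\<le>(m::nat). ((if k = 0 then 1 else 0)::real)\<^sup>2) = 1"
proof -
  have "(\<Sum>k\<le>m. ((if k = 0 then 1 else 0)::real)\<^sup>2) = (\<Sum>k\<le>m. if k = 0 then 1 else 0)" by (rule sum.cong) auto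
  also have "(\<Sum>k\<le>m. if k = 0 then 1 else 0) = (1::real)" by (subst sum.remove[of _ 0]) auto
  finally show ?thesis .
qed

lemma MI_mi0: "\<alpha> \<in> MI n d \<Longrightarrow> (\<And>k. k \<in> {1..n} \<Longrightarrow> \<alpha> k = 0) \<Longrightarrow> \<alpha> = mi0 d"
proof -
  assume MI: "\<alpha> \<in> MI n d" and z0: "\<And>k. k \<in> {1..n} \<Longrightarrow> \<alpha> k = 0"
  have z: "\<alpha> m = 0" if "m \<noteq> 0" for m
    using that z0[of m] MI by (cases "m \<le> n") (auto simp: MI_def)
  have "(\<Sum>m\<le>n. \<alpha> m) = \<alpha> 0" by (subst sum.remove[of _ 0]) (auto simp: z)
  then have "\<alpha> 0 = d" using MI by (simp add: MI_def)
  then show ?thesis using z by (auto simp: mi0_def fun_eq_iff)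
qed

lemma pw_delta0: "\<alpha> \<in> MI n d \<Longrightarrow> pw n (\<lambda>k. if k = 0 then 1 else 0) \<alpha> = (if \<alpha> = mi0 d then 1 else 0)"
proof -
  assume MI: "\<alpha> \<in> MI n d"
  have "pw n (\<lambda>k. if k = 0 then 1 else 0) \<alpha> = (\<lambda>k. (if k = 0 then 1 else (0::real)) ^ \<alpha> k) 0 * (\<Prod>k\<in>{..n}-{0}. (if k = 0 then 1 else 0) ^ \<alpha> k)"
    unfolding pw_def by (rule prod.remove) auto
  also have "(\<Prod>k\<in>{..n}-{0}. (if k = 0 then 1 else (0::real)) ^ \<alpha> k) = (\<Prod>k\<in>{..n}-{0}. if \<alpha> k = 0 then 1 else 0)"
    by (rule prod.cong) (auto simp: power_0_left)
  also have "(\<Prod>k\<in>{..n}-{0}. if \<alpha> k = 0 then 1 else (0::real)) = (if \<forall>k\<in>{..n}-{0}. \<alpha> k = 0 then 1 else 0)"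
    by (rule prod_ind') auto
  also have "(\<forall>k\<in>{..n}-{0}. \<alpha> k = 0) \<longleftrightarrow> \<alpha> = mi0 d"
  proof
    assume "\<forall>k\<in>{..n}-{0}. \<alpha> k = 0"
    then show "\<alpha> = mi0 d" by (intro MI_mi0[OF MI]) auto
  qed (auto simp: mi0_def)
  finally show ?thesis by simp
qed

lemma mono_mi0_canon: "mono (mi0 d) = canon n d 1 (\<lambda>k. if k = 0 then 1 else 0)"
proof
  fix \<alpha> show "mono (mi0 d) \<alpha> = canon n d 1 (\<lambda>k. if k = 0 then 1 else 0) \<alpha>"
    using mi0_MI[of d n] by (auto simp: mono_def canon_def pw_delta0 multinom_mi0)
qed

context SVL begin

abbreviation "E \<equiv> Epoint r n d"

lemma E_SV: "E \<in> SV r n d"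
proof -
  have "E = CT r n d (\<lambda>_. 1) (\<lambda>_ k. if k = 0 then 1 else 0)"
    unfolding Epoint_def CT_def by (rule tensor_cong) (simp add: mono_mi0_canon)
  moreover have "okp r n d (\<lambda>_. 1) (\<lambda>_ k. if k = 0 then 1 else 0)"
    unfolding okp_def by (simp add: sum_delta0_sq)
  ultimately show ?thesis using CT_SV by simp
qed

lemma E_apply: "E a = (if a = a0 then 1 else 0)"
  by (simp add: Epoint_eq)

definition Cr :: "(nat \<Rightarrow> nat \<Rightarrow> nat) \<Rightarrow> nat \<Rightarrow> nat \<Rightarrow> real" where
  "Cr a i k = sqrt ((real (a i 0) + 1) / (real (a i k) * real (d i)))"

lemma CT_split:
  assumes "i \<in> {1..r}" "a \<in> T"
  shows "CT r n d \<sigma> l a = Qc (n i) (d i) (\<sigma> i) (l i) (a i) * (\<Prod>j\<in>{1..r}-{i}. Qc (n j) (d j) (\<sigma> j) (l j) (a j))"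
  using assms by (simp add: CT_apply prod.remove)

lemma rel_SV:
  assumes q: "q \<in> SV r n d" and a: "a \<in> T" and i: "i \<in> {1..r}" and k: "k \<in> {1..n i}" and p: "1 \<le> a i k"
  shows "q a * q a0 = Cr a i k * q (dn a i k) * q (ee i k)"
proof -
  obtain \<sigma> l where ok: "okp r n d \<sigma> l" and qe: "q = CT r n d \<sigma> l" using SV_CT[OF q] by blast
  define Q where "Q j = Qc (n j) (d j) (\<sigma> j) (l j)" for j
  define PR where "PR x = (\<Prod>j\<in>{1..r}-{i}. Q j (x j))" for x
  have bT: "dn a i k \<in> T" using dn_T[OF a i k p] .
  have eT: "ee i k \<in> T" using ee_T[OF i k] .
  have c1: "q a = Q i (a i) * PR a" unfolding qe Q_def PR_def by (rule CT_split[OF i a])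
  have c2: "q a0 = Q i (mi0 (d i)) * PR a0" unfolding qe Q_def PR_def
    using CT_split[OF i a0_T] i by (simp add: a0_def)
  have c3: "q (dn a i k) = Q i (dnf (a i) k) * PR a" unfolding qe Q_def PR_def
    using CT_split[OF i bT] by (simp add: dn_def)
  have c4: "q (ee i k) = Q i (mi1 (d i) k) * PR a0" unfolding qe Q_def PR_def
    using CT_split[OF i eT] by (simp add: ee_def)
  define s where "s = \<sigma> i"
  define L where "L = l i"
  define dd where "dd = d i"
  define M where "M = multinom (n i) (d i)"
  have dd1: "1 \<le> dd" using nd[OF i] by (simp add: dd_def)
  have kk: "k \<in> {1..n i}" using k .
  have Ma: "M (a i) * a i k = M (dnf (a i) k) * (a i 0 + 1)"
    unfolding M_def by (rule multinom_dnf[where n="n i" and d="d i" and \<alpha>="a i" and k=k, OF kk p])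
  have Mpos: "M x > 0" for x unfolding M_def by (rule multinom_pos)
  have sq: "Cr a i k * sqrt (M (dnf (a i) k)) * sqrt dd = sqrt (M (a i))"
  proof -
    have "Cr a i k * sqrt (M (dnf (a i) k)) * sqrt dd =
          sqrt ((real (a i 0) + 1) / (real (a i k) * real dd) * M (dnf (a i) k) * dd)"
      unfolding Cr_def dd_def by (simp only: real_sqrt_mult[symmetric])
    also have "(real (a i 0) + 1) / (real (a i k) * real dd) * M (dnf (a i) k) * dd = M (a i)"
      using Ma dd1 p by (simp add: field_simps)
    finally show ?thesis .
  qed
  have pwd: "pw (n i) L (dnf (a i) k) * L k = pw (n i) L (a i) * L 0" by (rule pw_dnf[where n="n i" and \<alpha>="a i" and k=k, OF kk p])
  have L0: "L 0 ^ (dd - 1) * L 0 = L 0 ^ dd" using dd1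
    by (metis Suc_diff_le diff_Suc_1 power_Suc2)
  have f: "Q i (a i) * Q i (mi0 (d i)) = Cr a i k * Q i (dnf (a i) k) * Q i (mi1 (d i) k)"
  proof -
    have "Q i (a i) * Q i (mi0 (d i)) = s * s * sqrt (M (a i)) * pw (n i) L (a i) * L 0 ^ dd"
      unfolding Q_def Qc_def s_def L_def M_def dd_def by (simp add: multinom_mi0 pw_mi0 mult_ac)
    also have "\<dots> = s * s * (Cr a i k * sqrt (M (dnf (a i) k)) * sqrt dd) * (pw (n i) L (dnf (a i) k) * L k) * L 0 ^ (dd - 1)"
      unfolding sq pwd L0[symmetric] by (simp add: mult_ac)
    also have "\<dots> = Cr a i k * Q i (dnf (a i) k) * Q i (mi1 (d i) k)"
    proof -
      have m1: "multinom (n i) (d i) (mi1 (d i) k) = d i" by (rule multinom_mi1) (use nd[OF i] kk in auto)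
      have p1: "pw (n i) L (mi1 (d i) k) = L 0 ^ (d i - 1) * L k" by (rule pw_mi1) (use kk in auto)
      show ?thesis unfolding Q_def Qc_def s_def M_def dd_def L_def[symmetric] m1 p1
        by (simp add: mult_ac)
    qed
    finally show ?thesis .
  qed
  show ?thesis unfolding c1 c2 c3 c4 using f by (simp add: mult_ac)
qed

lemma norm_SV:
  assumes q: "q \<in> SV r n d"
  shows "(\<Sum>a\<in>T. (q a)\<^sup>2) = 1"
proof -
  obtain \<sigma> l where ok: "okp r n d \<sigma> l" and qe: "q = CT r n d \<sigma> l" using SV_CT[OF q] by blast
  have "(\<Sum>a\<in>T. (q a)\<^sup>2) = (\<Sum>a\<in>T. \<Prod>j\<in>{1..r}. (Qc (n j) (d j) (\<sigma> j) (l j) (a j))\<^sup>2)"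
    unfolding qe by (intro sum.cong refl) (simp add: CT_apply prod_power_distrib)
  also have "\<dots> = (\<Prod>j\<in>{1..r}. \<Sum>\<beta>\<in>MI (n j) (d j). (Qc (n j) (d j) (\<sigma> j) (l j) \<beta>)\<^sup>2)"
    by (rule sum_T_prod)
  also have "\<dots> = 1"
  proof (rule prod.neutral, rule ballI)
    fix j assume j: "j \<in> {1..r}"
    then have s: "\<sigma> j = 1 \<or> \<sigma> j = -1" and nn: "(\<Sum>k\<le>n j. (l j k)\<^sup>2) ^ d j = 1" using ok by (auto simp: okp_def)
    show "(\<Sum>\<beta>\<in>MI (n j) (d j). (Qc (n j) (d j) (\<sigma> j) (l j) \<beta>)\<^sup>2) = 1"
      using nn by (simp add: Qc_sq[OF s] multinomial)
  qed
  finally show ?thesis .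
qed

lemma tangentD:
  assumes "u \<in> tangent r n d q"
  obtains \<gamma> where "\<gamma> 0 = q" "\<forall>\<^sub>F t in nhds 0. \<gamma> t \<in> SV r n d" "curve_deriv r n d \<gamma> u"
  using assms unfolding tangent_def by blast

lemma tangent_hvec: "u \<in> tangent r n d q \<Longrightarrow> hvec r n d u"
  unfolding tangent_def curve_deriv_def by blast

lemma cd_coord: "curve_deriv r n d \<gamma> u \<Longrightarrow> x \<in> T \<Longrightarrow> ((\<lambda>t. \<gamma> t x) has_real_derivative u x) (at 0)"
  unfolding curve_deriv_def by blast

lemma lin_rel:
  assumes q: "q \<in> SV r n d" and u: "u \<in> tangent r n d q" and a: "a \<in> T" and i: "i \<in> {1..r}"
    and k: "k \<in> {1..n i}" and p: "1 \<le> a i k"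
  shows "u a * q a0 + q a * u a0 = Cr a i k * (u (dn a i k) * q (ee i k) + q (dn a i k) * u (ee i k))"
proof -
  obtain \<gamma> where g0: "\<gamma> 0 = q" and gs: "\<forall>\<^sub>F t in nhds 0. \<gamma> t \<in> SV r n d" and cd: "curve_deriv r n d \<gamma> u"
    using u by (rule tangentD)
  define b where "b = dn a i k"
  define e where "e = ee i k"
  have bT: "b \<in> T" unfolding b_def using dn_T[OF a i k p] .
  have eT: "e \<in> T" unfolding e_def using ee_T[OF i k] .
  note D = cd_coord[OF cd]
  have "((\<lambda>t. \<gamma> t a * \<gamma> t a0 - Cr a i k * (\<gamma> t b * \<gamma> t e)) has_real_derivative
     (u a * \<gamma> 0 a0 + \<gamma> 0 a * u a0 - Cr a i k * (u b * \<gamma> 0 e + \<gamma> 0 b * u e))) (at 0)"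
    by (auto intro!: derivative_eq_intros D a bT eT a0_T simp: algebra_simps)
  moreover have "\<forall>\<^sub>F t in nhds 0. \<gamma> t a * \<gamma> t a0 - Cr a i k * (\<gamma> t b * \<gamma> t e) = 0"
    using gs by (rule eventually_mono) (simp add: rel_SV[OF _ a i k p] b_def e_def)
  ultimately have "u a * \<gamma> 0 a0 + \<gamma> 0 a * u a0 - Cr a i k * (u b * \<gamma> 0 e + \<gamma> 0 b * u e) = 0"
    by (rule deriv_ev_zero)
  then show ?thesis unfolding g0 b_def e_def by simp
qed

lemma norm_tangent:
  assumes q: "q \<in> SV r n d" and u: "u \<in> tangent r n d q"
  shows "(\<Sum>a\<in>T. q a * u a) = 0"
proof -
  obtain \<gamma> where g0: "\<gamma> 0 = q" and gs: "\<forall>\<^sub>F t in nhds 0. \<gamma> t \<in> SV r n d" and cd: "curve_deriv r n d \<gamma> u"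
    using u by (rule tangentD)
  note D = cd_coord[OF cd]
  have "((\<lambda>t. (\<Sum>a\<in>T. (\<gamma> t a)\<^sup>2) - 1) has_real_derivative (\<Sum>a\<in>T. 2 * (u a * \<gamma> 0 a))) (at 0)"
    by (auto intro!: derivative_eq_intros D simp: algebra_simps)
  moreover have "\<forall>\<^sub>F t in nhds 0. (\<Sum>a\<in>T. (\<gamma> t a)\<^sup>2) - 1 = 0"
    using gs by (rule eventually_mono) (simp add: norm_SV)
  ultimately have "(\<Sum>a\<in>T. 2 * (u a * \<gamma> 0 a)) = 0" by (rule deriv_ev_zero)
  then show ?thesis unfolding g0 by (simp add: sum_distrib_left[symmetric] mult.commute)
qed

lemma tangentE_a0: "u \<in> tangent r n d E \<Longrightarrow> u a0 = 0"
proof -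
  assume u: "u \<in> tangent r n d E"
  have "(\<Sum>a\<in>T. E a * u a) = 0" by (rule norm_tangent[OF E_SV u])
  moreover have "(\<Sum>a\<in>T. E a * u a) = u a0"
  proof -
    have "(\<Sum>a\<in>T. E a * u a) = (\<Sum>a\<in>T. if a = a0 then u a else 0)" by (rule sum.cong) (auto simp: E_apply)
    then show ?thesis using finite_T a0_T by (simp add: sum.delta)
  qed
  ultimately show ?thesis by simp
qed

lemma tangentE_high:
  assumes u: "u \<in> tangent r n d E" and a: "a \<in> T" and na: "a \<noteq> a0" and i: "i \<in> {1..r}"
    and k: "k \<in> {1..n i}" and p: "1 \<le> a i k" and b: "dn a i k \<noteq> a0"
  shows "u a = 0"
  using lin_rel[OF E_SV u a i k p] na b ee_ne_a0[OF i k] by (simp add: E_apply)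

lemma tangentE_supp:
  assumes u: "u \<in> tangent r n d E" and nE: "a \<notin> EE"
  shows "u a = 0"
proof (cases "a \<in> T")
  case False then show ?thesis using tangent_hvec[OF u] by (simp add: hvec_def)
next
  case True
  show ?thesis
  proof (cases "a = a0")
    case True then show ?thesis using tangentE_a0[OF u] by simp
  next
    case False
    obtain i k where "i \<in> {1..r}" "k \<in> {1..n i}" "1 \<le> a i k" "dn a i k \<noteq> a0"
      using high_pos[OF \<open>a \<in> T\<close> False nE] by blast
    then show ?thesis using tangentE_high[OF u \<open>a \<in> T\<close> False] by blast
  qed
qed

lemma D_formula:
  assumes w: "w \<in> tangent r n d E" and v: "v \<in> tangent r n d E"
    and g0: "\<gamma> 0 = E" and gs: "\<forall>\<^sub>F t in nhds 0. \<gamma> t \<in> SV r n d" and cdw: "curve_deriv r n d \<gamma> w"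
    and V0: "V E = v" and Vt: "\<forall>\<^sub>F t in nhds 0. V (\<gamma> t) \<in> tangent r n d (\<gamma> t)"
    and cdD: "curve_deriv r n d (\<lambda>t. V (\<gamma> t)) D"
    and a: "a \<in> T" and na: "a \<noteq> a0" and i: "i \<in> {1..r}" and k: "k \<in> {1..n i}" and p: "1 \<le> a i k"
    and b: "dn a i k \<noteq> a0"
  shows "D a = Cr a i k * (v (dn a i k) * w (ee i k) + w (dn a i k) * v (ee i k))"
proof -
  define B where "B = dn a i k"
  define e where "e = ee i k"
  have bT: "B \<in> T" unfolding B_def using dn_T[OF a i k p] .
  have eT: "e \<in> T" unfolding e_def using ee_T[OF i k] .
  note DG = cd_coord[OF cdw] and DV = cd_coord[OF cdD]
  let ?U = "\<lambda>t. V (\<gamma> t)"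
  have "((\<lambda>t. ?U t a * \<gamma> t a0 + \<gamma> t a * ?U t a0 - Cr a i k * (?U t B * \<gamma> t e + \<gamma> t B * ?U t e)) has_real_derivative
     (D a * \<gamma> 0 a0 + ?U 0 a * w a0 + (w a * ?U 0 a0 + \<gamma> 0 a * D a0)
       - Cr a i k * (D B * \<gamma> 0 e + ?U 0 B * w e + (w B * ?U 0 e + \<gamma> 0 B * D e)))) (at 0)"
    by (auto intro!: derivative_eq_intros DG DV a bT eT a0_T simp: algebra_simps)
  moreover have "\<forall>\<^sub>F t in nhds 0. ?U t a * \<gamma> t a0 + \<gamma> t a * ?U t a0 - Cr a i k * (?U t B * \<gamma> t e + \<gamma> t B * ?U t e) = 0"
    using eventually_conj[OF gs Vt] by (rule eventually_mono) (simp add: lin_rel[OF _ _ a i k p] B_def e_def)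
  ultimately have z: "D a * \<gamma> 0 a0 + ?U 0 a * w a0 + (w a * ?U 0 a0 + \<gamma> 0 a * D a0)
       - Cr a i k * (D B * \<gamma> 0 e + ?U 0 B * w e + (w B * ?U 0 e + \<gamma> 0 B * D e)) = 0"
    by (rule deriv_ev_zero)
  have va: "v a = 0" by (rule tangentE_high[OF v a na i k p b])
  have wa: "w a = 0" by (rule tangentE_high[OF w a na i k p b])
  have ea: "e \<noteq> a0" unfolding e_def by (rule ee_ne_a0[OF i k])
  have U0: "?U 0 = v" using g0 V0 by simp
  show ?thesis using z unfolding U0 g0 using va wa na b ea V0
    by (simp add: E_apply B_def e_def algebra_simps)
qed

end


definition rotl :: "nat \<Rightarrow> real \<Rightarrow> (nat \<Rightarrow> real) \<Rightarrow> nat \<Rightarrow> real" where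
  "rotl k s L = L(0 := cos s * L 0 - sin s * L k, k := sin s * L 0 + cos s * L k)"

lemma rotl0: "k \<noteq> 0 \<Longrightarrow> rotl k 0 L = L"
  by (auto simp: rotl_def fun_eq_iff)

lemma rot_norm:
  assumes "k \<in> {1..m}"
  shows "(\<Sum>j\<le>m. (rotl k s L j)\<^sup>2) = (\<Sum>j\<le>m. (L j)\<^sup>2)"
proof -
  have k: "k \<noteq> 0" "k \<le> m" using assms by auto
  have r: "(\<Sum>j\<in>{..m}-{0,k}. (rotl k s L j)\<^sup>2) = (\<Sum>j\<in>{..m}-{0,k}. (L j)\<^sup>2)"
    by (rule sum.cong) (auto simp: rotl_def)
  have "(cos s * L 0 - sin s * L k)\<^sup>2 + (sin s * L 0 + cos s * L k)\<^sup>2 = (cos s * cos s + sin s * sin s) * ((L 0)\<^sup>2 + (L k)\<^sup>2)"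
    by algebra
  also have "\<dots> = (L 0)\<^sup>2 + (L k)\<^sup>2" by (simp only: sin_cos_squared_add3 mult_1)
  finally have "(cos s * L 0 - sin s * L k)\<^sup>2 + (sin s * L 0 + cos s * L k)\<^sup>2 = (L 0)\<^sup>2 + (L k)\<^sup>2" .
  then show ?thesis unfolding sum_split2[OF k, of "\<lambda>j. (rotl k s L j)\<^sup>2"] sum_split2[OF k, of "\<lambda>j. (L j)\<^sup>2"] r
    using k by (simp add: rotl_def)
qed

definition rest :: "nat \<Rightarrow> nat \<Rightarrow> (nat \<Rightarrow> real) \<Rightarrow> (nat \<Rightarrow> nat) \<Rightarrow> real" where
  "rest n k L \<beta> = (\<Prod>m\<in>{..n}-{0,k}. L m ^ \<beta> m)"

lemma pw_split:
  assumes "k \<in> {1..n}"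
  shows "pw n L \<beta> = L 0 ^ \<beta> 0 * L k ^ \<beta> k * rest n k L \<beta>"
  unfolding pw_def rest_def using assms by (intro prod_split2) auto

lemma rest_rot: "rest n k (rotl k s L) \<beta> = rest n k L \<beta>"
  unfolding rest_def by (rule prod.cong) (auto simp: rotl_def)

lemma rest_upf: "rest n k L (upf \<alpha> k) = rest n k L \<alpha>"
  unfolding rest_def by (rule prod.cong) (auto simp: upf_def)

lemma rest_dnf: "rest n k L (dnf \<alpha> k) = rest n k L \<alpha>"
  unfolding rest_def by (rule prod.cong) (auto simp: dnf_def)

lemma sqrt_sq_mult: "x \<ge> 0 \<Longrightarrow> sqrt (x * x * M) = x * sqrt M"
  by (simp add: real_sqrt_mult)

lemma deriv_rot:
  "((\<lambda>s. (cos s * a - sin s * b) ^ p * (sin s * a + cos s * b) ^ q) has_real_derivative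
     (real p * a ^ (p - 1) * (- b) * b ^ q + a ^ p * (real q * b ^ (q - 1) * a))) (at 0)"
  by (auto intro!: derivative_eq_intros simp: algebra_simps)

context SVL begin

definition Aop :: "nat \<Rightarrow> nat \<Rightarrow> tvec \<Rightarrow> tvec" where
  "Aop i k q = (\<lambda>a. if a \<in> T then - sqrt (real (a i 0) * real (a i k + 1)) * q (up a i k)
                              + sqrt (real (a i k) * real (a i 0 + 1)) * q (dn a i k) else 0)"

lemma Lie_tangent:
  assumes q: "q \<in> SV r n d" and i: "i \<in> {1..r}" and k: "k \<in> {1..n i}"
  shows "Aop i k q \<in> tangent r n d q"
proof -
  obtain \<sigma> l where ok: "okp r n d \<sigma> l" and qe: "q = CT r n d \<sigma> l" using SV_CT[OF q] by blast
  have k0: "k \<noteq> 0" using k by simp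
  define l' where "l' s = l(i := rotl k s (l i))" for s
  define \<gamma> where "\<gamma> s = CT r n d \<sigma> (l' s)" for s
  have ok': "okp r n d \<sigma> (l' s)" for s
    using ok rot_norm[OF k, of s "l i"] unfolding okp_def l'_def by auto
  have g0: "\<gamma> 0 = q" unfolding \<gamma>_def qe l'_def using rotl0[OF k0] by simp
  have gS: "\<forall>\<^sub>F t in nhds 0. \<gamma> t \<in> SV r n d" unfolding \<gamma>_def using ok' CT_SV by simp
  define PR where "PR x = (\<Prod>j\<in>{1..r}-{i}. Qc (n j) (d j) (\<sigma> j) (l j) (x j))" for x
  have cd: "curve_deriv r n d \<gamma> (Aop i k q)"
    unfolding curve_deriv_def
  proof (intro conjI ballI)
    show "hvec r n d (Aop i k q)" by (simp add: hvec_def Aop_def)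
    fix a assume a: "a \<in> T"
    define \<alpha> where "\<alpha> = a i"
    define L where "L = l i"
    define M where "M = multinom (n i) (d i)"
    define c where "c = \<sigma> i * sqrt (M \<alpha>) * rest (n i) k L \<alpha> * PR a"
    have PRs: "(\<Prod>j\<in>{1..r}-{i}. Qc (n j) (d j) (\<sigma> j) (l' s j) (a j)) = PR a" for s
      unfolding PR_def l'_def by (rule prod.cong) auto
    have gs: "\<gamma> s a = c * ((cos s * L 0 - sin s * L k) ^ \<alpha> 0 * (sin s * L 0 + cos s * L k) ^ \<alpha> k)" for s
    proof -
      have "\<gamma> s a = Qc (n i) (d i) (\<sigma> i) (rotl k s L) \<alpha> * PR a"
        unfolding \<gamma>_def CT_split[OF i a] PRs by (simp add: l'_def L_def \<alpha>_def)
      also have "\<dots> = c * ((cos s * L 0 - sin s * L k) ^ \<alpha> 0 * (sin s * L 0 + cos s * L k) ^ \<alpha> k)"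
        unfolding Qc_def pw_split[OF k] rest_rot c_def M_def using k0 by (simp add: rotl_def mult_ac)
      finally show ?thesis .
    qed
    have der: "((\<lambda>s. \<gamma> s a) has_real_derivative
        c * (real (\<alpha> 0) * L 0 ^ (\<alpha> 0 - 1) * (- L k) * L k ^ \<alpha> k + L 0 ^ \<alpha> 0 * (real (\<alpha> k) * L k ^ (\<alpha> k - 1) * L 0))) (at 0)"
      unfolding gs by (intro DERIV_cmult deriv_rot)
    have MI: "\<alpha> \<in> MI (n i) (d i)" using a i by (simp add: tidx_def \<alpha>_def)
    have qa: "q x = Qc (n i) (d i) (\<sigma> i) L (x i) * PR x" if "x \<in> T" for x
      unfolding qe PR_def L_def by (rule CT_split[OF i that])
    have tA: "c * (real (\<alpha> 0) * L 0 ^ (\<alpha> 0 - 1) * (- L k) * L k ^ \<alpha> k) = - sqrt (real (a i 0) * real (a i k + 1)) * q (up a i k)"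
    proof (cases "\<alpha> 0 = 0")
      case True then show ?thesis by (simp add: \<alpha>_def)
    next
      case False
      then have p: "1 \<le> a i 0" by (simp add: \<alpha>_def)
      have uT: "up a i k \<in> T" by (rule up_T[OF a i k p])
      have PRu: "PR (up a i k) = PR a" unfolding PR_def up_def by (rule prod.cong) auto
      have Mu: "M \<alpha> * \<alpha> 0 = M (upf \<alpha> k) * (\<alpha> k + 1)" unfolding M_def
        by (rule multinom_upf[where n="n i" and \<alpha>=\<alpha>]) (use k p in \<open>auto simp: \<alpha>_def\<close>)
      have sq: "sqrt (real (\<alpha> 0) * real (\<alpha> k + 1)) * sqrt (M (upf \<alpha> k)) = real (\<alpha> 0) * sqrt (M \<alpha>)"
      proof -
        have "sqrt (real (\<alpha> 0) * real (\<alpha> k + 1)) * sqrt (M (upf \<alpha> k)) = sqrt (real (\<alpha> 0) * (M (upf \<alpha> k) * real (\<alpha> k + 1)))"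
          by (simp add: real_sqrt_mult[symmetric] mult_ac)
        also have "\<dots> = sqrt (real (\<alpha> 0) * real (\<alpha> 0) * M \<alpha>)" using Mu by (simp add: mult_ac)
        also have "\<dots> = real (\<alpha> 0) * sqrt (M \<alpha>)" by (rule sqrt_sq_mult) simp
        finally show ?thesis .
      qed
      have pwu: "pw (n i) L (upf \<alpha> k) = L 0 ^ (\<alpha> 0 - 1) * L k ^ (\<alpha> k + 1) * rest (n i) k L \<alpha>"
        unfolding pw_split[OF k] rest_upf using k0 by (simp add: upf_def)
      have "q (up a i k) = \<sigma> i * sqrt (M (upf \<alpha> k)) * (L 0 ^ (\<alpha> 0 - 1) * L k ^ (\<alpha> k + 1) * rest (n i) k L \<alpha>) * PR a"
        unfolding qa[OF uT] PRu Qc_def pwu[symmetric] M_def by (simp add: up_def \<alpha>_def)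
      then show ?thesis unfolding c_def using sq[symmetric]
        by (simp add: \<alpha>_def[symmetric] mult_ac)
    qed
    have tB: "c * (L 0 ^ \<alpha> 0 * (real (\<alpha> k) * L k ^ (\<alpha> k - 1) * L 0)) = sqrt (real (a i k) * real (a i 0 + 1)) * q (dn a i k)"
    proof (cases "\<alpha> k = 0")
      case True then show ?thesis by (simp add: \<alpha>_def)
    next
      case False
      then have p: "1 \<le> a i k" by (simp add: \<alpha>_def)
      have dT: "dn a i k \<in> T" by (rule dn_T[OF a i k p])
      have PRd: "PR (dn a i k) = PR a" unfolding PR_def dn_def by (rule prod.cong) auto
      have Md: "M \<alpha> * \<alpha> k = M (dnf \<alpha> k) * (\<alpha> 0 + 1)" unfolding M_def
        by (rule multinom_dnf[where n="n i" and \<alpha>=\<alpha>]) (use k p in \<open>auto simp: \<alpha>_def\<close>)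
      have sq: "sqrt (real (\<alpha> k) * real (\<alpha> 0 + 1)) * sqrt (M (dnf \<alpha> k)) = real (\<alpha> k) * sqrt (M \<alpha>)"
      proof -
        have "sqrt (real (\<alpha> k) * real (\<alpha> 0 + 1)) * sqrt (M (dnf \<alpha> k)) = sqrt (real (\<alpha> k) * (M (dnf \<alpha> k) * real (\<alpha> 0 + 1)))"
          by (simp add: real_sqrt_mult[symmetric] mult_ac)
        also have "\<dots> = sqrt (real (\<alpha> k) * real (\<alpha> k) * M \<alpha>)" using Md by (simp add: mult_ac)
        also have "\<dots> = real (\<alpha> k) * sqrt (M \<alpha>)" by (rule sqrt_sq_mult) simp
        finally show ?thesis .
      qed
      have pwd: "pw (n i) L (dnf \<alpha> k) = L 0 ^ (\<alpha> 0 + 1) * L k ^ (\<alpha> k - 1) * rest (n i) k L \<alpha>"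
        unfolding pw_split[OF k] rest_dnf using k0 by (simp add: dnf_def)
      have "q (dn a i k) = \<sigma> i * sqrt (M (dnf \<alpha> k)) * (L 0 ^ (\<alpha> 0 + 1) * L k ^ (\<alpha> k - 1) * rest (n i) k L \<alpha>) * PR a"
        unfolding qa[OF dT] PRd Qc_def pwd[symmetric] M_def by (simp add: dn_def \<alpha>_def)
      then show ?thesis unfolding c_def using sq[symmetric]
        by (simp add: \<alpha>_def[symmetric] mult_ac)
    qed
    have "Aop i k q a = c * (real (\<alpha> 0) * L 0 ^ (\<alpha> 0 - 1) * (- L k) * L k ^ \<alpha> k + L 0 ^ \<alpha> 0 * (real (\<alpha> k) * L k ^ (\<alpha> k - 1) * L 0))"
      unfolding distrib_left tA tB using a by (simp add: Aop_def)
    then show "((\<lambda>t. \<gamma> t a) has_real_derivative Aop i k q a) (at 0)" using der by simp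
  qed
  show ?thesis unfolding tangent_def using g0 gS cd by blast
qed

lemma tangent_scale:
  assumes "u \<in> tangent r n d q"
  shows "(\<lambda>a. c * u a) \<in> tangent r n d q"
proof -
  obtain \<gamma> where g0: "\<gamma> 0 = q" and gs: "\<forall>\<^sub>F t in nhds 0. \<gamma> t \<in> SV r n d" and cd: "curve_deriv r n d \<gamma> u"
    using assms by (rule tangentD)
  define \<gamma>' where "\<gamma>' t = \<gamma> (c * t)" for t
  have "\<forall>\<^sub>F t in nhds 0. \<gamma>' t \<in> SV r n d"
  proof -
    have "((\<lambda>t. c * t) \<longlongrightarrow> c * 0) (nhds 0)"
      by (intro tendsto_mult_left filterlim_ident)
    then have "filterlim (\<lambda>t. c * t) (nhds 0) (nhds 0)" by simp
    from eventually_compose_filterlim[OF gs this] show ?thesis unfolding \<gamma>'_def .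
  qed
  moreover have "curve_deriv r n d \<gamma>' (\<lambda>a. c * u a)"
    unfolding curve_deriv_def \<gamma>'_def
  proof (intro conjI ballI)
    show "hvec r n d (\<lambda>a. c * u a)" using cd by (simp add: curve_deriv_def hvec_def)
    fix a assume a: "a \<in> T"
    have g': "((\<lambda>t. c * t) has_real_derivative c) (at 0)" by (auto intro!: derivative_eq_intros)
    have f': "((\<lambda>t. \<gamma> t a) has_real_derivative u a) (at ((\<lambda>t. c * t) 0))" using cd_coord[OF cd a] by simp
    from DERIV_chain2[OF f' g'] show "((\<lambda>t. \<gamma> (c * t) a) has_real_derivative c * u a) (at 0)"
      by (simp add: mult.commute)
  qed
  ultimately show ?thesis unfolding tangent_def mem_Collect_eq
    by (intro exI[of _ \<gamma>']) (simp add: \<gamma>'_def g0)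
qed

lemma Aop_E:
  assumes i: "i \<in> {1..r}" and k: "k \<in> {1..n i}"
  shows "Aop i k E = (\<lambda>a. if a = ee i k then sqrt (real (d i)) else 0)"
proof
  fix a
  show "Aop i k E a = (if a = ee i k then sqrt (real (d i)) else 0)"
  proof (cases "a \<in> T")
    case False then show ?thesis using ee_T[OF i k] by (auto simp: Aop_def)
  next
    case True
    have u: "E (up a i k) = 0" using up_ne_a0[OF i k] by (simp add: E_apply)
    show ?thesis
    proof (cases "a = ee i k")
      case True
      have "dn (ee i k) i k = a0" using k i nd[OF i]
        by (auto simp: dn_def ee_def dnf_def mi1_def a0_def mi0_def fun_eq_iff)
      moreover have "ee i k i k = 1" "ee i k i 0 + 1 = d i" using k i nd[OF i] by (auto simp: ee_def mi1_def)
      ultimately show ?thesis using True \<open>a \<in> T\<close> u by (simp add: Aop_def E_apply)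
    next
      case False
      have "sqrt (real (a i k) * real (a i 0 + 1)) * E (dn a i k) = 0"
      proof (cases "a i k = 0")
        case False
        then have "dn a i k \<noteq> a0" using dn_a0[OF \<open>a \<in> T\<close> i k] \<open>a \<noteq> ee i k\<close> by auto
        then show ?thesis by (simp add: E_apply)
      qed simp
      then show ?thesis using False \<open>a \<in> T\<close> u by (simp add: Aop_def)
    qed
  qed
qed

lemma tbasis_tangent:
  assumes i: "i \<in> {1..r}" and k: "k \<in> {1..n i}"
  shows "(\<lambda>a. if a = ee i k then 1 else 0) \<in> tangent r n d E"
proof -
  have "(\<lambda>a. (1 / sqrt (real (d i))) * Aop i k E a) \<in> tangent r n d E"
    by (rule tangent_scale[OF Lie_tangent[OF E_SV i k]])
  moreover have "(\<lambda>a. (1 / sqrt (real (d i))) * Aop i k E a) = (\<lambda>a. if a = ee i k then 1 else 0)"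
    using nd[OF i] by (auto simp: Aop_E[OF i k])
  ultimately show ?thesis by simp
qed

end


lemma rot_params:
  fixes c :: "nat \<Rightarrow> real" and m dd :: nat
  assumes dd: "1 \<le> dd"
  defines "N \<equiv> sqrt (\<Sum>k\<in>{1..m}. (c k)\<^sup>2)"
  defines "u \<equiv> (\<lambda>k. if N = 0 then 0 else c k / N)"
  defines "\<rho> \<equiv> N / sqrt dd"
  shows "(\<Sum>k\<le>m. (if k = 0 then cos (\<rho> * s) else sin (\<rho> * s) * u k)\<^sup>2) = 1"
    and "k \<in> {1..m} \<Longrightarrow> sqrt dd * u k * \<rho> = c k"
proof -
  have S0: "(\<Sum>k\<in>{1..m}. (c k)\<^sup>2) \<ge> 0" by (intro sum_nonneg) simp
  have NN: "N * N = (\<Sum>k\<in>{1..m}. (c k)\<^sup>2)" unfolding N_def using S0 by simp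
  have split: "(\<Sum>k\<le>m. (if k = 0 then cos (\<rho> * s) else sin (\<rho> * s) * u k)\<^sup>2)
      = (cos (\<rho> * s))\<^sup>2 + (sin (\<rho> * s))\<^sup>2 * (\<Sum>k\<in>{1..m}. (u k)\<^sup>2)"
  proof -
    have "{..m} - {0} = {1..m}" by auto
    then have "(\<Sum>k\<le>m. (if k = 0 then cos (\<rho> * s) else sin (\<rho> * s) * u k)\<^sup>2)
       = (cos (\<rho> * s))\<^sup>2 + (\<Sum>k\<in>{1..m}. (if k = 0 then cos (\<rho> * s) else sin (\<rho> * s) * u k)\<^sup>2)"
      by (subst sum.remove[of _ 0]) auto
    also have "(\<Sum>k\<in>{1..m}. (if k = 0 then cos (\<rho> * s) else sin (\<rho> * s) * u k)\<^sup>2) = (\<Sum>k\<in>{1..m}. (sin (\<rho> * s))\<^sup>2 * (u k)\<^sup>2)"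
      by (rule sum.cong) (auto simp: power_mult_distrib)
    finally show ?thesis by (simp add: sum_distrib_left)
  qed
  show "(\<Sum>k\<le>m. (if k = 0 then cos (\<rho> * s) else sin (\<rho> * s) * u k)\<^sup>2) = 1"
  proof (cases "N = 0")
    case True then show ?thesis unfolding split by (simp add: \<rho>_def)
  next
    case False
    have "(\<Sum>k\<in>{1..m}. (u k)\<^sup>2) = (\<Sum>k\<in>{1..m}. (c k)\<^sup>2) / (N * N)"
      unfolding u_def using False by (simp add: sum_divide_distrib power_divide power2_eq_square)
    also have "\<dots> = 1" using False NN by (metis divide_self mult_eq_0_iff)
    finally show ?thesis unfolding split by simp
  qed
  assume k: "k \<in> {1..m}"
  show "sqrt dd * u k * \<rho> = c k"
  proof (cases "N = 0")
    case True
    then have "(\<Sum>k\<in>{1..m}. (c k)\<^sup>2) = 0" using NN by simp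
    then have "(c k)\<^sup>2 = 0" using k by (subst (asm) sum_nonneg_eq_0_iff) auto
    then show ?thesis using True by (simp add: u_def)
  next
    case False then show ?thesis using dd by (simp add: u_def \<rho>_def)
  qed
qed

context SVL begin

lemma E_CT: "E = CT r n d (\<lambda>_. 1) (\<lambda>_ k. if k = 0 then 1 else 0)"
  unfolding Epoint_def CT_def by (rule tensor_cong) (simp add: mono_mi0_canon)

lemma sum_ee:
  fixes c :: "nat \<Rightarrow> nat \<Rightarrow> real"
  assumes i: "i \<in> {1..r}" and k: "k \<in> {1..n i}"
  shows "(\<Sum>j\<in>{1..r}. \<Sum>m\<in>{1..n j}. c j m * (if ee i k = ee j m then 1 else 0)) = c i k"
proof -
  have "(\<Sum>j\<in>{1..r}. \<Sum>m\<in>{1..n j}. c j m * (if ee i k = ee j m then 1 else 0))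
      = (\<Sum>j\<in>{1..r}. if j = i then c i k else 0)"
  proof (rule sum.cong[OF refl])
    fix j assume j: "j \<in> {1..r}"
    have "(\<Sum>m\<in>{1..n j}. c j m * (if ee i k = ee j m then 1 else 0)) = (\<Sum>m\<in>{1..n j}. if j = i \<and> m = k then c j m else 0)"
      by (rule sum.cong) (use ee_inj[OF i k j] in auto)
    also have "\<dots> = (if j = i then c i k else 0)" using k by (cases "j = i") (auto simp: sum.delta')
    finally show "(\<Sum>m\<in>{1..n j}. c j m * (if ee i k = ee j m then 1 else 0)) = (if j = i then c i k else 0)" .
  qed
  also have "\<dots> = c i k" using i by (simp add: sum.delta')
  finally show ?thesis .
qed

lemma span_tangent:
  "(\<lambda>a. \<Sum>j\<in>{1..r}. \<Sum>m\<in>{1..n j}. c j m * (if a = ee j m then 1 else 0)) \<in> tangent r n d E"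
proof -
  define N where "N j = sqrt (\<Sum>k\<in>{1..n j}. (c j k)\<^sup>2)" for j
  define u where "u j = (\<lambda>k. if N j = 0 then 0 else c j k / N j)" for j
  define \<rho> where "\<rho> j = N j / sqrt (d j)" for j
  define l where "l s j k = (if k = 0 then 1 else 0) * cos (\<rho> j * s) + sin (\<rho> j * s) * (if k = 0 then 0 else u j k)" for s j k
  have l_alt: "l s j k = (if k = 0 then cos (\<rho> j * s) else sin (\<rho> j * s) * u j k)" for s j k
    by (simp add: l_def)
  define \<gamma> where "\<gamma> s = CT r n d (\<lambda>_. 1) (l s)" for s
  have ok: "okp r n d (\<lambda>_. 1) (l s)" for s
    unfolding okp_def l_alt u_def \<rho>_def N_def using rot_params(1) nd by simp
  have l0: "l 0 = (\<lambda>_ k. if k = 0 then 1 else 0)" by (auto simp: l_alt fun_eq_iff)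
  have g0: "\<gamma> 0 = E" unfolding \<gamma>_def E_CT l0 ..
  have gS: "\<forall>\<^sub>F t in nhds 0. \<gamma> t \<in> SV r n d" unfolding \<gamma>_def using ok CT_SV by simp
  have ex: "\<exists>D. ((\<lambda>s. \<gamma> s a) has_real_derivative D) (at 0)" if a: "a \<in> T" for a
  proof -
    have "\<gamma> s a = (\<Prod>j\<in>{1..r}. 1 * sqrt (multinom (n j) (d j) (a j)) * (\<Prod>m\<le>n j. l s j m ^ a j m))" for s
      unfolding \<gamma>_def CT_apply using a by (simp add: Qc_def pw_def)
    moreover have "\<exists>D. ((\<lambda>s. (\<Prod>j\<in>{1..r}. 1 * sqrt (multinom (n j) (d j) (a j)) * (\<Prod>m\<le>n j. l s j m ^ a j m)))
       has_real_derivative D) (at 0)"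
      unfolding l_def
      by (rule exI, (rule has_field_derivative_prod | rule derivative_intros)+)
    ultimately show ?thesis by auto
  qed
  define D where "D a = (if a \<in> T then (SOME D. ((\<lambda>s. \<gamma> s a) has_real_derivative D) (at 0)) else 0)" for a
  have cd: "curve_deriv r n d \<gamma> D"
    unfolding curve_deriv_def
  proof (intro conjI ballI)
    show "hvec r n d D" by (simp add: hvec_def D_def)
    fix a assume a: "a \<in> T"
    show "((\<lambda>t. \<gamma> t a) has_real_derivative D a) (at 0)"
      unfolding D_def using a someI_ex[OF ex[OF a]] by simp
  qed
  have DT: "D \<in> tangent r n d E" unfolding tangent_def using g0 gS cd by blast
  have Dee: "D (ee i k) = c i k" if i: "i \<in> {1..r}" and k: "k \<in> {1..n i}" for i k
  proof -
    have eT: "ee i k \<in> T" by (rule ee_T[OF i k])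
    have d1: "1 \<le> d i" using nd[OF i] by simp
    define P where "P s = (\<Prod>j\<in>{1..r}-{i}. cos (\<rho> j * s) ^ d j)" for s
    have ge: "\<gamma> s (ee i k) = sqrt (real (d i)) * u i k * (cos (\<rho> i * s) ^ (d i - 1) * sin (\<rho> i * s) * P s)" for s
    proof -
      have pe: "(\<Prod>j\<in>{1..r}-{i}. Qc (n j) (d j) 1 (l s j) (ee i k j)) = (\<Prod>j\<in>{1..r}-{i}. Qc (n j) (d j) 1 (l s j) (mi0 (d j)))"
        by (rule prod.cong) (auto simp: ee_def a0_def)
      have "\<gamma> s (ee i k) = Qc (n i) (d i) 1 (l s i) (mi1 (d i) k) * (\<Prod>j\<in>{1..r}-{i}. Qc (n j) (d j) 1 (l s j) (mi0 (d j)))"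
        unfolding \<gamma>_def CT_split[OF i eT] pe[symmetric] by (simp add: ee_def)
      also have "(\<Prod>j\<in>{1..r}-{i}. Qc (n j) (d j) 1 (l s j) (mi0 (d j))) = P s"
        unfolding P_def by (rule prod.cong) (auto simp: Qc_def multinom_mi0 pw_mi0 l_alt)
      also have "Qc (n i) (d i) 1 (l s i) (mi1 (d i) k) = sqrt (real (d i)) * (cos (\<rho> i * s) ^ (d i - 1) * (sin (\<rho> i * s) * u i k))"
        using k d1 by (simp add: Qc_def multinom_mi1 pw_mi1 l_alt)
      finally show ?thesis by (simp add: mult_ac)
    qed
    have "\<exists>P'. (P has_real_derivative P') (at 0)"
      unfolding P_def by (rule exI, (rule has_field_derivative_prod | rule derivative_intros)+)
    then obtain P' where P': "(P has_real_derivative P') (at 0)" by blast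
    have P0: "P 0 = 1" unfolding P_def by simp
    have "((\<lambda>s. \<gamma> s (ee i k)) has_real_derivative sqrt (real (d i)) * u i k * \<rho> i) (at 0)"
      unfolding ge using P' P0
      by (auto intro!: derivative_eq_intros simp: algebra_simps)
    moreover have "((\<lambda>s. \<gamma> s (ee i k)) has_real_derivative D (ee i k)) (at 0)" using cd_coord[OF cd eT] .
    ultimately have "D (ee i k) = sqrt (real (d i)) * u i k * \<rho> i" using DERIV_unique by blast
    also have "\<dots> = c i k" unfolding u_def \<rho>_def N_def using rot_params(2)[OF d1 k] by simp
    finally show ?thesis .
  qed
  have "D = (\<lambda>a. \<Sum>j\<in>{1..r}. \<Sum>m\<in>{1..n j}. c j m * (if a = ee j m then 1 else 0))"
  proof
    fix a
    show "D a = (\<Sum>j\<in>{1..r}. \<Sum>m\<in>{1..n j}. c j m * (if a = ee j m then 1 else 0))"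
    proof (cases "a \<in> EE")
      case True
      then obtain i k where ik: "i \<in> {1..r}" "k \<in> {1..n i}" "a = ee i k" unfolding EE_def by blast
      then show ?thesis using Dee sum_ee by simp
    next
      case False
      have "D a = 0" by (rule tangentE_supp[OF DT False])
      moreover have "(\<Sum>j\<in>{1..r}. \<Sum>m\<in>{1..n j}. c j m * (if a = ee j m then 1 else 0)) = 0"
        using False unfolding EE_def by (auto intro!: sum.neutral)
      ultimately show ?thesis by simp
    qed
  qed
  then show ?thesis using DT by simp
qed

end


lemma sum_pairs:
  fixes h :: "nat \<Rightarrow> nat \<Rightarrow> real"
  assumes fA: "finite A"
  shows "(\<Sum>x\<in>A. \<Sum>y\<in>A-{x}. h x y) = (\<Sum>x\<in>A. \<Sum>y\<in>{y. y \<in> A \<and> x < y}. h x y + h y x)"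
proof -
  have s: "(\<Sum>y\<in>A-{x}. h x y) = (\<Sum>y\<in>{y. y \<in> A \<and> x < y}. h x y) + (\<Sum>y\<in>{y. y \<in> A \<and> y < x}. h x y)" for x
  proof -
    have e: "A - {x} = {y. y \<in> A \<and> x < y} \<union> {y. y \<in> A \<and> y < x}" by auto
    have "sum (h x) (A - {x}) = sum (h x) ({y. y \<in> A \<and> x < y} \<union> {y. y \<in> A \<and> y < x})" by (simp only: e)
    also have "\<dots> = sum (h x) {y. y \<in> A \<and> x < y} + sum (h x) {y. y \<in> A \<and> y < x}"
      by (rule sum.union_disjoint) (use fA in auto)
    finally show ?thesis .
  qed
  have sw: "(\<Sum>x\<in>A. \<Sum>y\<in>{y. y \<in> A \<and> y < x}. h x y) = (\<Sum>y\<in>A. \<Sum>x\<in>{x. x \<in> A \<and> y < x}. h x y)"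
    by (rule sum.swap_restrict[OF fA fA])
  show ?thesis unfolding s sum.distrib sw by simp
qed

lemma greaterThan_eq: "{y. y \<in> {1..m} \<and> x < y} = {x<..(m::nat)}"
  by auto

context SVL begin

lemma ip_sum: "finite X \<Longrightarrow> ip r n d D (\<lambda>a. \<Sum>x\<in>X. h x a) = (\<Sum>x\<in>X. ip r n d D (h x))"
  unfolding ip_def by (simp add: sum_distrib_left sum.swap[of _ T])

lemma ip_cdelta: "x \<in> T \<Longrightarrow> ip r n d D (\<lambda>a. c * (if a = x then 1 else 0)) = c * D x"
proof -
  assume x: "x \<in> T"
  have "ip r n d D (\<lambda>a. c * (if a = x then 1 else 0)) = c * ip r n d D (\<lambda>a. if a = x then 1 else 0)"
    unfolding ip_def by (simp add: sum_distrib_left mult_ac)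
  then show ?thesis using ip_delta[OF x] by simp
qed

lemma ip_add: "ip r n d D (\<lambda>a. u a + v a) = ip r n d D u + ip r n d D v"
  unfolding ip_def by (simp add: distrib_left sum.distrib)

lemma widx_T: "i \<in> {1..r} \<Longrightarrow> 2 \<le> d i \<Longrightarrow> k \<in> {1..n i} \<Longrightarrow> l \<in> {1..n i} \<Longrightarrow> widx i k l \<in> T"
  unfolding widx_def using a0_T by (auto simp: tidx_def mi2_MI)

lemma gidx_T: "i \<in> {1..r} \<Longrightarrow> j \<in> {1..r} \<Longrightarrow> k \<in> {1..n i} \<Longrightarrow> l \<in> {1..n j} \<Longrightarrow> gidx i j k l \<in> T"
  unfolding gidx_def using a0_T nd by (auto simp: tidx_def mi1_MI)

lemma eq_a0_upd:
  assumes a: "a \<in> T" and i: "i \<in> {1..r}"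
  shows "a = a0(i := \<mu>) \<longleftrightarrow> a i = \<mu> \<and> (\<forall>j\<in>{1..r}-{i}. a j = mi0 (d j))"
  using a i by (auto simp: a0_def tidx_def fun_eq_iff)

lemma bw_Wfac:
  assumes dd: "2 \<le> dd" and b: "\<beta> \<in> MI m dd"
  shows "bw m dd (Wfac m dd fi) \<beta> = (\<Sum>k\<in>{1..m}. \<Sum>l\<in>{k<..m}. fi k l * (if \<beta> = mi2 dd k l then 1 else 0))
      + (\<Sum>k\<in>{1..m}. fi k k * (if \<beta> = mi2 dd k k then 1 else 0))"
proof -
  have pos: "real dd * (real dd - 1) > 0" by (intro mult_pos_pos) (use dd in auto)
  define S where "S = sqrt (multinom m dd \<beta>)"
  have t1: "fi k l * sqrt (real dd * (real dd - 1)) * mono (mi2 dd k l) \<beta> / S = fi k l * (if \<beta> = mi2 dd k l then 1 else 0)"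
    if "k \<in> {1..m}" "l \<in> {k<..m}" for k l
  proof (cases "\<beta> = mi2 dd k l")
    case True
    have M: "multinom m dd (mi2 dd k l) = real dd * (real dd - 1)" using that dd multinom_mi2[of dd k m l] by auto
    have sp: "sqrt (real dd * (real dd - 1)) > 0" using pos by (rule real_sqrt_gt_zero)
    have "sqrt (real dd * (real dd - 1)) / sqrt (multinom m dd (mi2 dd k l)) = 1" unfolding M using sp
      by (metis divide_self less_irrefl)
    then have r1: "sqrt (real dd * (real dd - 1)) / S = 1" unfolding S_def True .
    have "fi k l * sqrt (real dd * (real dd - 1)) * mono (mi2 dd k l) \<beta> / S = fi k l * (sqrt (real dd * (real dd - 1)) / S)"
      using True by (simp add: mono_def)
    then show ?thesis using r1 True by simp
  qed (simp add: mono_def)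
  have t2: "fi k k * sqrt (real dd * (real dd - 1) / 2) * mono (mi2 dd k k) \<beta> / S = fi k k * (if \<beta> = mi2 dd k k then 1 else 0)"
    if "k \<in> {1..m}" for k
  proof (cases "\<beta> = mi2 dd k k")
    case True
    have M: "multinom m dd (mi2 dd k k) = real dd * (real dd - 1) / 2" using that dd multinom_mi2[of dd k m k] by auto
    have sp: "sqrt (real dd * (real dd - 1) / 2) > 0" using pos by (intro real_sqrt_gt_zero) simp
    have "sqrt (real dd * (real dd - 1) / 2) / sqrt (multinom m dd (mi2 dd k k)) = 1" unfolding M using sp
      by (metis divide_self less_irrefl)
    then have r1: "sqrt (real dd * (real dd - 1) / 2) / S = 1" unfolding S_def True .
    have "fi k k * sqrt (real dd * (real dd - 1) / 2) * mono (mi2 dd k k) \<beta> / S = fi k k * (sqrt (real dd * (real dd - 1) / 2) / S)"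
      using True by (simp add: mono_def)
    then show ?thesis using r1 True by simp
  qed (simp add: mono_def)
  show ?thesis unfolding bw_def Wfac_def S_def[symmetric] add_divide_distrib sum_divide_distrib
    using t1 t2 by simp
qed

lemma Wfac_1: "Wfac m 1 fi = (\<lambda>_. 0)"
  unfolding Wfac_def by simp

lemma prod_ind2: "finite S \<Longrightarrow> (\<Prod>j\<in>S. if P j then (1::real) else 0) = (if \<forall>j\<in>S. P j then 1 else 0)"
  by (induction S rule: finite_induct) auto

lemma tensor_i:
  assumes i: "i \<in> {1..r}" and a: "a \<in> T"
  shows "tensor r n d (\<lambda>j. if j = i then h else mono (mi0 (d j))) a = bw (n i) (d i) h (a i) * (if a = a0(i := a i) then 1 else 0)"
proof -
  have "(\<Prod>j\<in>{1..r}-{i}. bw (n j) (d j) (if j = i then h else mono (mi0 (d j))) (a j)) = (\<Prod>j\<in>{1..r}-{i}. if a j = mi0 (d j) then 1 else 0)"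
    using a by (intro prod.cong) (auto simp: tidx_def bw_mono0)
  also have "\<dots> = (if \<forall>j\<in>{1..r}-{i}. a j = mi0 (d j) then 1 else 0)" by (rule prod_ind2) simp
  also have "\<dots> = (if a = a0(i := a i) then 1 else 0)" using eq_a0_upd[OF a i] by simp
  finally show ?thesis unfolding tensor_split[OF i] using a by simp
qed

lemma Wcomp_eq:
  assumes i: "i \<in> {1..r}" and dd: "2 \<le> d i"
  shows "Wcomp r n d f i = (\<lambda>a. (\<Sum>k\<in>{1..n i}. \<Sum>l\<in>{k<..n i}. f i k l * (if a = widx i k l then 1 else 0))
      + (\<Sum>k\<in>{1..n i}. f i k k * (if a = widx i k k then 1 else 0)))"
proof
  fix a
  show "Wcomp r n d f i a = (\<Sum>k\<in>{1..n i}. \<Sum>l\<in>{k<..n i}. f i k l * (if a = widx i k l then 1 else 0))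
      + (\<Sum>k\<in>{1..n i}. f i k k * (if a = widx i k k then 1 else 0))"
  proof (cases "a \<in> T")
    case False
    have "a \<noteq> widx i k l" if "k \<in> {1..n i}" "l \<in> {1..n i}" for k l using widx_T[OF i dd that] False by auto
    then show ?thesis using False by (auto simp: Wcomp_def tensor_def intro!: sum.neutral)
  next
    case True
    have MI: "a i \<in> MI (n i) (d i)" using True i by (simp add: tidx_def)
    have e: "(a = widx i k l) \<longleftrightarrow> (a i = mi2 (d i) k l \<and> a = a0(i := a i))" for k l
      unfolding widx_def by auto
    show ?thesis unfolding Wcomp_def tensor_i[OF i True] bw_Wfac[OF dd MI] e
      by (simp add: sum_distrib_right distrib_right mult_ac if_distrib cong: if_cong)
  qed
qed

lemma Wcomp_1:
  assumes i: "i \<in> {1..r}" and dd: "d i = 1"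
  shows "Wcomp r n d f i = (\<lambda>_. 0)"
proof
  fix a show "Wcomp r n d f i a = 0"
  proof (cases "a \<in> T")
    case True
    have "Wfac (n i) (d i) (f i) = (\<lambda>_. 0)" unfolding Wfac_def using dd by simp
    then have "bw (n i) (d i) (Wfac (n i) (d i) (f i)) (a i) = 0" by (simp add: bw_def)
    then show ?thesis unfolding Wcomp_def tensor_i[OF i True] by simp
  qed (simp add: Wcomp_def tensor_def)
qed

lemma Gcomp_eq:
  assumes i: "i \<in> {1..r}" and j: "j \<in> {1..r}" and ij: "i < j"
  shows "Gcomp r n d g i j = (\<lambda>a. \<Sum>k\<in>{1..n i}. \<Sum>l\<in>{1..n j}. g i j k l * (if a = gidx i j k l then 1 else 0))"
  unfolding Gcomp_def using Ebas_eq[OF i j] ij by (auto intro!: ext sum.cong)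

definition adm :: "tvec \<Rightarrow> tvec \<Rightarrow> (real \<Rightarrow> tvec) \<Rightarrow> (tvec \<Rightarrow> tvec) \<Rightarrow> tvec \<Rightarrow> bool" where
  "adm v w \<gamma> V D \<longleftrightarrow> w \<in> tangent r n d E \<and> v \<in> tangent r n d E \<and> \<gamma> 0 = E \<and>
     (\<forall>\<^sub>F t in nhds 0. \<gamma> t \<in> SV r n d) \<and> curve_deriv r n d \<gamma> w \<and> V E = v \<and>
     (\<forall>\<^sub>F t in nhds 0. V (\<gamma> t) \<in> tangent r n d (\<gamma> t)) \<and> curve_deriv r n d (\<lambda>t. V (\<gamma> t)) D"

lemma D_adm:
  assumes "adm v w \<gamma> V D" and a: "a \<in> T" and na: "a \<noteq> a0" and i: "i \<in> {1..r}" and k: "k \<in> {1..n i}"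
    and p: "1 \<le> a i k" and b: "dn a i k \<noteq> a0"
  shows "D a = Cr a i k * (v (dn a i k) * w (ee i k) + w (dn a i k) * v (ee i k))"
proof -
  from assms(1) have h: "w \<in> tangent r n d E" "v \<in> tangent r n d E" "\<gamma> 0 = E"
     "\<forall>\<^sub>F t in nhds 0. \<gamma> t \<in> SV r n d" "curve_deriv r n d \<gamma> w" "V E = v"
     "\<forall>\<^sub>F t in nhds 0. V (\<gamma> t) \<in> tangent r n d (\<gamma> t)" "curve_deriv r n d (\<lambda>t. V (\<gamma> t)) D"
    unfolding adm_def by auto
  show ?thesis by (rule D_formula[OF h(1) h(2) h(3) h(4) h(5) h(6) h(7) h(8) a na i k p b])
qed

lemma D_widx:
  assumes ad: "adm v w \<gamma> V D" and i: "i \<in> {1..r}" and dd: "2 \<le> d i" and k: "k \<in> {1..n i}" and l: "l \<in> {1..n i}" and kl: "k < l"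
  shows "D (widx i k l) = sqrt ((real (d i) - 1) / real (d i)) * (v (ee i l) * w (ee i k) + w (ee i l) * v (ee i k))"
proof -
  have k0: "k \<noteq> 0" "l \<noteq> 0" using k l by auto
  have p: "widx i k l i k = 1" using kl k0 by (simp add: widx_def mi2_def)
  have z: "widx i k l i 0 = d i - 2" using k0 by (simp add: widx_def mi2_def)
  have dn: "dn (widx i k l) i k = ee i l"
    using kl k0 dd by (auto simp: dn_def widx_def ee_def dnf_def mi2_def mi1_def fun_eq_iff)
  have na: "widx i k l \<noteq> a0"
  proof
    assume "widx i k l = a0"
    then have "widx i k l i k = a0 i k" by simp
    then show False using p i k0 by (simp add: a0_def mi0_def)
  qed
  have Cr: "Cr (widx i k l) i k = sqrt ((real (d i) - 1) / real (d i))"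
    unfolding Cr_def p z using dd by (simp add: of_nat_diff)
  show ?thesis using D_adm[OF ad widx_T[OF i dd k l] na i k] p dn ee_ne_a0[OF i l] Cr by simp
qed

lemma D_widx2:
  assumes ad: "adm v w \<gamma> V D" and i: "i \<in> {1..r}" and dd: "2 \<le> d i" and k: "k \<in> {1..n i}"
  shows "D (widx i k k) = sqrt ((real (d i) - 1) / (2 * real (d i))) * (v (ee i k) * w (ee i k) + w (ee i k) * v (ee i k))"
proof -
  have k0: "k \<noteq> 0" using k by auto
  have p: "widx i k k i k = 2" using k0 by (simp add: widx_def mi2_def)
  have z: "widx i k k i 0 = d i - 2" using k0 by (simp add: widx_def mi2_def)
  have dn: "dn (widx i k k) i k = ee i k"
    using k0 dd by (auto simp: dn_def widx_def ee_def dnf_def mi2_def mi1_def fun_eq_iff)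
  have na: "widx i k k \<noteq> a0"
  proof
    assume "widx i k k = a0"
    then have "widx i k k i k = a0 i k" by simp
    then show False using p i k0 by (simp add: a0_def mi0_def)
  qed
  have Cr: "Cr (widx i k k) i k = sqrt ((real (d i) - 1) / (2 * real (d i)))"
    unfolding Cr_def p z using dd by (simp add: of_nat_diff)
  show ?thesis using D_adm[OF ad widx_T[OF i dd k k] na i k] p dn ee_ne_a0[OF i k] Cr by simp
qed

lemma D_gidx:
  assumes ad: "adm v w \<gamma> V D" and i: "i \<in> {1..r}" and j: "j \<in> {1..r}" and ij: "i \<noteq> j"
    and k: "k \<in> {1..n i}" and l: "l \<in> {1..n j}"
  shows "D (gidx i j k l) = v (ee j l) * w (ee i k) + w (ee j l) * v (ee i k)"
proof -
  have k0: "k \<noteq> 0" "l \<noteq> 0" using k l by auto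
  have di: "1 \<le> d i" using nd[OF i] by simp
  have p: "gidx i j k l i k = 1" using ij k0 by (simp add: gidx_def mi1_def)
  have z: "gidx i j k l i 0 + 1 = d i" using ij k0 di by (simp add: gidx_def mi1_def)
  have dn: "dn (gidx i j k l) i k = ee j l"
    using ij k0 i di by (auto simp: dn_def gidx_def ee_def dnf_def mi1_def a0_def mi0_def fun_eq_iff)
  have na: "gidx i j k l \<noteq> a0"
  proof
    assume "gidx i j k l = a0"
    then have "gidx i j k l i k = a0 i k" by simp
    then show False using p i k0 by (simp add: a0_def mi0_def)
  qed
  have Cr: "Cr (gidx i j k l) i k = 1"
  proof -
    have "real (gidx i j k l i 0) + 1 = real (d i)" using arg_cong[OF z, of real] by simp
    then show ?thesis unfolding Cr_def p using di by simp
  qed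
  show ?thesis using D_adm[OF ad gidx_T[OF i j k l] na i k] p dn ee_ne_a0[OF j l] Cr by simp
qed

lemma Gindex_sym: "Gindex r n d i j = Gindex r n d j i"
  unfolding Gindex_def by auto

lemma ipDP:
  assumes ad: "adm v w \<gamma> V D" and P: "P \<in> Pspace r n d"
  shows "ip r n d D P = 0"
  unfolding ip_def
proof (rule sum.neutral, rule ballI)
  fix a assume a: "a \<in> T"
  have Pn: "P \<in> normal r n d E" and Pz: "\<And>x. ((\<exists>i\<in>{1..r}. x \<in> Windex r n d i) \<or> (\<exists>i\<in>{1..r}. \<exists>j\<in>{i<..r}. x \<in> Gindex r n d i j))
         \<Longrightarrow> ip r n d P (bvec x) = 0"
    using P unfolding Pspace_def by auto
  have bv: "ip r n d P (bvec x) = P x" if "x \<in> T" for x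
    unfolding bvec_def using ip_delta[OF that] .
  have v: "v \<in> tangent r n d E" and w: "w \<in> tangent r n d E" using ad by (auto simp: adm_def)
  show "D a * P a = 0"
  proof (cases "a = a0")
    case True
    have "ip r n d P E = 0" using Pn by (simp add: normal_def)
    then have "P a0 = 0" unfolding Epoint_eq using ip_delta[OF a0_T] by simp
    then show ?thesis using True by simp
  next
    case na: False
    show ?thesis
    proof (cases "a \<in> EE")
      case True
      then obtain i k where ik: "i \<in> {1..r}" "k \<in> {1..n i}" "a = ee i k" unfolding EE_def by blast
      have "ip r n d P (\<lambda>b. if b = ee i k then 1 else 0) = 0"
        using Pn tbasis_tangent[OF ik(1,2)] by (simp add: normal_def)
      then have "P a = 0" using ip_delta[OF ee_T[OF ik(1,2)]] ik(3) by simp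
      then show ?thesis by simp
    next
      case nE: False
      obtain i k where ik: "i \<in> {1..r}" "k \<in> {1..n i}" "1 \<le> a i k" and b: "dn a i k \<noteq> a0"
        using high_pos[OF a na nE] by blast
      have Dform: "D a = Cr a i k * (v (dn a i k) * w (ee i k) + w (dn a i k) * v (ee i k))"
        by (rule D_adm[OF ad a na ik b])
      have bT: "dn a i k \<in> T" by (rule dn_T[OF a ik])
      show ?thesis
      proof (cases "dn a i k \<in> EE")
        case False
        obtain i' k' where ik': "i' \<in> {1..r}" "k' \<in> {1..n i'}" "1 \<le> dn a i k i' k'" "dn (dn a i k) i' k' \<noteq> a0"
          using high_pos[OF bT b False] by blast
        have "v (dn a i k) = 0" by (rule tangentE_high[OF v bT b ik'])
        moreover have "w (dn a i k) = 0" by (rule tangentE_high[OF w bT b ik'])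
        ultimately show ?thesis using Dform by simp
      next
        case True
        then obtain j l where jl: "j \<in> {1..r}" "l \<in> {1..n j}" "dn a i k = ee j l" unfolding EE_def by blast
        have comp: "\<And>m. m \<noteq> i \<Longrightarrow> a m = ee j l m" using jl(3) by (metis dn_def fun_upd_other)
        have ci: "dnf (a i) k = ee j l i" using jl(3) by (metis dn_def fun_upd_same)
        have k0: "k \<noteq> 0" using ik by simp
        have ai0: "a i 0 + 1 = ee j l i 0" using fun_cong[OF ci, of 0] k0 by (simp add: dnf_def)
        have dj: "1 \<le> d j" "1 \<le> d i" using nd jl(1) nd ik(1) by auto
        have oth: "\<And>m. m \<in> {1..r} \<Longrightarrow> m \<noteq> i \<Longrightarrow> m \<noteq> j \<Longrightarrow> a m 0 = d m"
          using comp by (auto simp: ee_def a0_def mi0_def)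
        have "P a = 0"
        proof (cases "j = i")
          case True
          have "a \<in> Windex r n d i"
            unfolding Windex_def using a ai0 True dj oth comp jl(2)
            by (auto simp: ee_def mi1_def a0_def mi0_def)
          then have "\<exists>i\<in>{1..r}. a \<in> Windex r n d i" using ik(1) by blast
          then show ?thesis using Pz[of a] bv[OF a] by simp
        next
          case False
          have "a i 0 + 1 = d i" using ai0 False ik(1) by (simp add: ee_def a0_def mi0_def)
          moreover have "a j 0 + 1 = d j" using comp[of j] False dj jl(2) by (simp add: ee_def mi1_def)
          ultimately have G: "a \<in> Gindex r n d i j" unfolding Gindex_def using a oth by auto
          have "\<exists>i'\<in>{1..r}. \<exists>j'\<in>{i'<..r}. a \<in> Gindex r n d i' j'"
          proof (cases "i < j")
            case True then show ?thesis using G ik(1) jl(1) by (intro bexI[of _ i] bexI[of _ j]) auto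
          next
            case False then have "j < i" using \<open>j \<noteq> i\<close> by simp
            moreover have "a \<in> Gindex r n d j i" using G Gindex_sym by simp
            ultimately show ?thesis using ik(1) jl(1) by (intro bexI[of _ j] bexI[of _ i]) auto
          qed
          then show ?thesis using Pz[of a] bv[OF a] by auto
        qed
        then show ?thesis by simp
      qed
    qed
  qed
qed

end


lemma sqrt_half2: "sqrt (a / (2 * b)) * 2 = sqrt (a / b) * sqrt 2"
proof -
  have e: "a / (2 * b) = (a / b) / 2" by (simp add: divide_divide_eq_left mult.commute)
  have "sqrt (a / (2 * b)) = sqrt (a / b) / sqrt 2" unfolding e by (rule real_sqrt_divide)
  moreover have "2 / sqrt 2 = sqrt (2::real)" by (rule real_div_sqrt) simp
  ultimately show ?thesis by (metis times_divide_eq_left times_divide_eq_right)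
qed

context SVL begin

definition Bf :: "(nat \<Rightarrow> nat \<Rightarrow> nat \<Rightarrow> real) \<Rightarrow> (nat \<Rightarrow> nat \<Rightarrow> nat \<Rightarrow> nat \<Rightarrow> real) \<Rightarrow> tvec \<Rightarrow> tvec \<Rightarrow> real" where
  "Bf f g v w = (\<Sum>i\<in>{1..r}. \<Sum>k\<in>{1..n i}. \<Sum>j\<in>{1..r}. \<Sum>l\<in>{1..n j}. v (ee i k) * Lmat d f g i k j l * w (ee j l))"

lemma SV_hvec: "q \<in> SV r n d \<Longrightarrow> hvec r n d q"
proof -
  assume "q \<in> SV r n d"
  then obtain \<sigma> l where "q = CT r n d \<sigma> l" using SV_CT by blast
  then show ?thesis by (simp add: hvec_def CT_apply)
qed

lemma gcoord:
  assumes g0: "\<gamma> 0 = E" and gs: "\<forall>\<^sub>F t in nhds 0. \<gamma> t \<in> SV r n d" and cd: "curve_deriv r n d \<gamma> w"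
  shows "((\<lambda>t. \<gamma> t x) has_real_derivative w x) (at 0)"
proof (cases "x \<in> T")
  case True then show ?thesis by (rule cd_coord[OF cd])
next
  case False
  have w0: "w x = 0" using cd False by (simp add: curve_deriv_def hvec_def)
  have ev: "\<forall>\<^sub>F t in nhds 0. \<gamma> t x = 0"
    using gs by (rule eventually_mono) (use False SV_hvec in \<open>auto simp: hvec_def\<close>)
  have "((\<lambda>t. \<gamma> t x) has_real_derivative 0) (at 0) \<longleftrightarrow> ((\<lambda>_. 0::real) has_real_derivative 0) (at 0)"
    by (rule DERIV_cong_ev[OF refl ev refl])
  then show ?thesis using w0 by simp
qed

lemma adm_exists:
  assumes i: "i \<in> {1..r}" and k: "k \<in> {1..n i}" and w: "w \<in> tangent r n d E"
  shows "\<exists>\<gamma> V D. adm (\<lambda>a. if a = ee i k then 1 else 0) w \<gamma> V D"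
proof -
  obtain \<gamma> where g0: "\<gamma> 0 = E" and gs: "\<forall>\<^sub>F t in nhds 0. \<gamma> t \<in> SV r n d" and cd: "curve_deriv r n d \<gamma> w"
    using w by (rule tangentD)
  define V where "V q = (\<lambda>a. (1 / sqrt (real (d i))) * Aop i k q a)" for q
  define c1 where "c1 a = sqrt (real (a i 0) * real (a i k + 1))" for a :: "nat \<Rightarrow> nat \<Rightarrow> nat"
  define c2 where "c2 a = sqrt (real (a i k) * real (a i 0 + 1))" for a :: "nat \<Rightarrow> nat \<Rightarrow> nat"
  define D where "D a = (if a \<in> T then (1 / sqrt (real (d i))) * (- c1 a * w (up a i k) + c2 a * w (dn a i k)) else 0)" for a
  have dpos: "sqrt (real (d i)) > 0" using nd[OF i] by simp
  have V0: "V E = (\<lambda>a. if a = ee i k then 1 else 0)"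
    unfolding V_def Aop_E[OF i k] using dpos by (auto intro!: ext)
  have Vt: "\<forall>\<^sub>F t in nhds 0. V (\<gamma> t) \<in> tangent r n d (\<gamma> t)"
    using gs by (rule eventually_mono) (unfold V_def, rule tangent_scale, rule Lie_tangent[OF _ i k])
  have cdD: "curve_deriv r n d (\<lambda>t. V (\<gamma> t)) D"
    unfolding curve_deriv_def
  proof (intro conjI ballI)
    show "hvec r n d D" by (simp add: hvec_def D_def)
    fix a assume a: "a \<in> T"
    have "V (\<gamma> t) a = (1 / sqrt (real (d i))) * (- c1 a * \<gamma> t (up a i k) + c2 a * \<gamma> t (dn a i k))" for t
      using a by (simp add: V_def Aop_def c1_def c2_def)
    moreover have "((\<lambda>t. (1 / sqrt (real (d i))) * (- c1 a * \<gamma> t (up a i k) + c2 a * \<gamma> t (dn a i k)))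
        has_real_derivative D a) (at 0)"
      unfolding D_def using a by (simp only: if_True) (intro DERIV_cmult DERIV_add gcoord[OF g0 gs cd])
    ultimately show "((\<lambda>t. V (\<gamma> t) a) has_real_derivative D a) (at 0)" by simp
  qed
  have "adm (\<lambda>a. if a = ee i k then 1 else 0) w \<gamma> V D"
    unfolding adm_def using w tbasis_tangent[OF i k] g0 gs cd V0 Vt cdD by simp
  then show ?thesis by blast
qed

lemma ipDW:
  assumes ad: "adm v w \<gamma> V D" and i: "i \<in> {1..r}"
  shows "ip r n d D (Wcomp r n d f i) = (if 2 \<le> d i then
      (\<Sum>k\<in>{1..n i}. \<Sum>l\<in>{k<..n i}. f i k l * (sqrt ((real (d i) - 1) / real (d i)) * (v (ee i l) * w (ee i k) + w (ee i l) * v (ee i k))))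
      + (\<Sum>k\<in>{1..n i}. f i k k * (sqrt ((real (d i) - 1) / (2 * real (d i))) * (v (ee i k) * w (ee i k) + w (ee i k) * v (ee i k))))
      else 0)"
proof (cases "2 \<le> d i")
  case True
  have "ip r n d D (Wcomp r n d f i) = (\<Sum>k\<in>{1..n i}. \<Sum>l\<in>{k<..n i}. f i k l * D (widx i k l))
      + (\<Sum>k\<in>{1..n i}. f i k k * D (widx i k k))"
    unfolding Wcomp_eq[OF i True] ip_add ip_sum[OF finite_atLeastAtMost] ip_sum[OF finite_greaterThanAtMost]
    using widx_T[OF i True] by (auto intro!: sum.cong simp: ip_cdelta)
  also have "\<dots> = (\<Sum>k\<in>{1..n i}. \<Sum>l\<in>{k<..n i}. f i k l * (sqrt ((real (d i) - 1) / real (d i)) * (v (ee i l) * w (ee i k) + w (ee i l) * v (ee i k))))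
      + (\<Sum>k\<in>{1..n i}. f i k k * (sqrt ((real (d i) - 1) / (2 * real (d i))) * (v (ee i k) * w (ee i k) + w (ee i k) * v (ee i k))))"
    using D_widx[OF ad i True] D_widx2[OF ad i True] by (auto intro!: sum.cong arg_cong2[where f="(+)"])
  finally show ?thesis using True by simp
next
  case False
  then have "d i = 1" using nd[OF i] by simp
  then show ?thesis using False Wcomp_1[OF i] by (simp add: ip_def)
qed

lemma ipDG:
  assumes ad: "adm v w \<gamma> V D" and i: "i \<in> {1..r}" and j: "j \<in> {1..r}" and ij: "i < j"
  shows "ip r n d D (Gcomp r n d g i j) = (\<Sum>k\<in>{1..n i}. \<Sum>l\<in>{1..n j}. g i j k l * (v (ee j l) * w (ee i k) + w (ee j l) * v (ee i k)))"
  unfolding Gcomp_eq[OF i j ij] ip_sum[OF finite_atLeastAtMost]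
  using gidx_T[OF i j] D_gidx[OF ad i j] ij by (auto intro!: sum.cong simp: ip_cdelta)

end


context SVL begin

definition Wv :: "(nat \<Rightarrow> nat \<Rightarrow> nat \<Rightarrow> real) \<Rightarrow> tvec \<Rightarrow> tvec \<Rightarrow> nat \<Rightarrow> real" where
  "Wv f v w i = (if 2 \<le> d i then
      (\<Sum>k\<in>{1..n i}. \<Sum>l\<in>{k<..n i}. f i k l * (sqrt ((real (d i) - 1) / real (d i)) * (v (ee i l) * w (ee i k) + w (ee i l) * v (ee i k))))
      + (\<Sum>k\<in>{1..n i}. f i k k * (sqrt ((real (d i) - 1) / (2 * real (d i))) * (v (ee i k) * w (ee i k) + w (ee i k) * v (ee i k))))
      else 0)"

definition Gv :: "(nat \<Rightarrow> nat \<Rightarrow> nat \<Rightarrow> nat \<Rightarrow> real) \<Rightarrow> tvec \<Rightarrow> tvec \<Rightarrow> nat \<Rightarrow> nat \<Rightarrow> real" where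
  "Gv g v w i j = (\<Sum>k\<in>{1..n i}. \<Sum>l\<in>{1..n j}. g i j k l * (v (ee j l) * w (ee i k) + w (ee j l) * v (ee i k)))"

definition Qm where
  "Qm f g v w i j = (\<Sum>k\<in>{1..n i}. \<Sum>l\<in>{1..n j}. v (ee i k) * Lmat d f g i k j l * w (ee j l))"

lemma Qm_diag:
  assumes sym: "\<forall>i k l. f i k l = f i l k" and i: "i \<in> {1..r}"
  shows "Qm f g v w i i = Wv f v w i"
proof (cases "2 \<le> d i")
  case False
  then have "d i = 1" using nd[OF i] by simp
  then show ?thesis using False by (simp add: Qm_def Wv_def Lmat_def)
next
  case True
  define s where "s = sqrt ((real (d i) - 1) / real (d i))"
  define s' where "s' = sqrt ((real (d i) - 1) / (2 * real (d i)))"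
  have ss: "s' * 2 = s * sqrt 2" unfolding s_def s'_def by (rule sqrt_half2)
  define V where "V k = v (ee i k)" for k
  define W where "W k = w (ee i k)" for k
  define h where "h k l = V k * (s * f i k l) * W l" for k l
  have L: "Lmat d f g i k i l = s * (if k = l then sqrt 2 else 1) * f i k l" for k l
    by (simp add: Lmat_def s_def)
  have "Qm f g v w i i = (\<Sum>k\<in>{1..n i}. V k * (s * sqrt 2 * f i k k) * W k + (\<Sum>l\<in>{1..n i}-{k}. h k l))"
    unfolding Qm_def L
  proof (rule sum.cong[OF refl])
    fix k assume k: "k \<in> {1..n i}"
    have "(\<Sum>l\<in>{1..n i}. v (ee i k) * (s * (if k = l then sqrt 2 else 1) * f i k l) * w (ee i l))
       = v (ee i k) * (s * sqrt 2 * f i k k) * w (ee i k) + (\<Sum>l\<in>{1..n i}-{k}. v (ee i k) * (s * (if k = l then sqrt 2 else 1) * f i k l) * w (ee i l))"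
      by (subst sum.remove[of _ k]) (use k in auto)
    also have "(\<Sum>l\<in>{1..n i}-{k}. v (ee i k) * (s * (if k = l then sqrt 2 else 1) * f i k l) * w (ee i l)) = (\<Sum>l\<in>{1..n i}-{k}. h k l)"
      by (rule sum.cong) (auto simp: h_def V_def W_def)
    finally show "(\<Sum>l\<in>{1..n i}. v (ee i k) * (s * (if k = l then sqrt 2 else 1) * f i k l) * w (ee i l))
       = V k * (s * sqrt 2 * f i k k) * W k + (\<Sum>l\<in>{1..n i}-{k}. h k l)" by (simp add: V_def W_def)
  qed
  also have "\<dots> = (\<Sum>k\<in>{1..n i}. V k * (s * sqrt 2 * f i k k) * W k) + (\<Sum>k\<in>{1..n i}. \<Sum>l\<in>{1..n i}-{k}. h k l)"
    by (rule sum.distrib)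
  also have "(\<Sum>k\<in>{1..n i}. \<Sum>l\<in>{1..n i}-{k}. h k l) = (\<Sum>k\<in>{1..n i}. \<Sum>l\<in>{k<..n i}. h k l + h l k)"
    by (rule sum_pairs[where h=h and A="{1..n i}", OF finite_atLeastAtMost, unfolded greaterThan_eq])
  also have "\<dots> = (\<Sum>k\<in>{1..n i}. \<Sum>l\<in>{k<..n i}. f i k l * (s * (V l * W k + W l * V k)))"
    using sym by (intro sum.cong refl) (auto simp: h_def algebra_simps)
  also have "(\<Sum>k\<in>{1..n i}. V k * (s * sqrt 2 * f i k k) * W k) = (\<Sum>k\<in>{1..n i}. f i k k * (s' * (V k * W k + W k * V k)))"
  proof (rule sum.cong[OF refl])
    fix k
    have "V k * (s * sqrt 2 * f i k k) * W k = f i k k * ((s' * 2) * (V k * W k))" unfolding ss by (simp add: mult_ac)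
    then show "V k * (s * sqrt 2 * f i k k) * W k = f i k k * (s' * (V k * W k + W k * V k))" by (simp add: algebra_simps)
  qed
  finally show ?thesis using True unfolding Wv_def s_def s'_def V_def W_def by (simp add: add.commute)
qed

lemma Qm_off:
  assumes ij: "i < j"
  shows "Qm f g v w i j + Qm f g v w j i = Gv g v w i j"
proof -
  have a: "Qm f g v w i j = (\<Sum>k\<in>{1..n i}. \<Sum>l\<in>{1..n j}. v (ee i k) * g i j k l * w (ee j l))"
    unfolding Qm_def using ij by (simp add: Lmat_def)
  have "Qm f g v w j i = (\<Sum>l\<in>{1..n j}. \<Sum>k\<in>{1..n i}. v (ee j l) * g i j k l * w (ee i k))"
    unfolding Qm_def using ij by (simp add: Lmat_def)
  also have "\<dots> = (\<Sum>k\<in>{1..n i}. \<Sum>l\<in>{1..n j}. v (ee j l) * g i j k l * w (ee i k))"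
    by (rule sum.swap)
  finally have b: "Qm f g v w j i = (\<Sum>k\<in>{1..n i}. \<Sum>l\<in>{1..n j}. v (ee j l) * g i j k l * w (ee i k))" .
  show ?thesis unfolding a b Gv_def sum.distrib[symmetric]
    by (intro sum.cong refl) (simp add: algebra_simps)
qed

lemma Bf_decomp:
  assumes sym: "\<forall>i k l. f i k l = f i l k"
  shows "Bf f g v w = (\<Sum>i\<in>{1..r}. Wv f v w i) + (\<Sum>i\<in>{1..r}. \<Sum>j\<in>{i<..r}. Gv g v w i j)"
proof -
  have "Bf f g v w = (\<Sum>i\<in>{1..r}. \<Sum>j\<in>{1..r}. Qm f g v w i j)"
    unfolding Bf_def Qm_def by (intro sum.cong refl sum.swap)
  also have "\<dots> = (\<Sum>i\<in>{1..r}. Qm f g v w i i + (\<Sum>j\<in>{1..r}-{i}. Qm f g v w i j))"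
    by (intro sum.cong refl) (subst sum.remove, auto)
  also have "\<dots> = (\<Sum>i\<in>{1..r}. Qm f g v w i i) + (\<Sum>i\<in>{1..r}. \<Sum>j\<in>{1..r}-{i}. Qm f g v w i j)"
    by (rule sum.distrib)
  also have "(\<Sum>i\<in>{1..r}. \<Sum>j\<in>{1..r}-{i}. Qm f g v w i j) = (\<Sum>i\<in>{1..r}. \<Sum>j\<in>{i<..r}. Qm f g v w i j + Qm f g v w j i)"
    by (rule sum_pairs[where h="Qm f g v w" and A="{1..r}", OF finite_atLeastAtMost, unfolded greaterThan_eq])
  also have "\<dots> = (\<Sum>i\<in>{1..r}. \<Sum>j\<in>{i<..r}. Gv g v w i j)"
    by (intro sum.cong refl) (simp add: Qm_off)
  also have "(\<Sum>i\<in>{1..r}. Qm f g v w i i) = (\<Sum>i\<in>{1..r}. Wv f v w i)"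
    by (intro sum.cong refl) (simp add: Qm_diag[OF sym])
  finally show ?thesis .
qed

lemma ipDF:
  assumes ad: "adm v w \<gamma> V D" and P: "P \<in> Pspace r n d" and sym: "\<forall>i k l. f i k l = f i l k"
  shows "ip r n d D (\<lambda>a. P a + (\<Sum>i\<in>{1..r}. Wcomp r n d f i a) + (\<Sum>i\<in>{1..r}. \<Sum>j\<in>{i<..r}. Gcomp r n d g i j a))
     = Bf f g v w"
proof -
  have "ip r n d D (\<lambda>a. P a + (\<Sum>i\<in>{1..r}. Wcomp r n d f i a) + (\<Sum>i\<in>{1..r}. \<Sum>j\<in>{i<..r}. Gcomp r n d g i j a))
     = ip r n d D P + (\<Sum>i\<in>{1..r}. ip r n d D (Wcomp r n d f i)) + (\<Sum>i\<in>{1..r}. \<Sum>j\<in>{i<..r}. ip r n d D (Gcomp r n d g i j))"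
    unfolding ip_add ip_sum[OF finite_atLeastAtMost] ip_sum[OF finite_greaterThanAtMost] by simp
  also have "\<dots> = (\<Sum>i\<in>{1..r}. Wv f v w i) + (\<Sum>i\<in>{1..r}. \<Sum>j\<in>{i<..r}. Gv g v w i j)"
    using ipDP[OF ad P] ipDW[OF ad] ipDG[OF ad] unfolding Wv_def Gv_def by (auto intro!: sum.cong)
  also have "\<dots> = Bf f g v w" by (rule Bf_decomp[OF sym, symmetric])
  finally show ?thesis .
qed

lemma sum_ee':
  fixes c :: "nat \<Rightarrow> nat \<Rightarrow> real"
  assumes i: "i \<in> {1..r}" and k: "k \<in> {1..n i}"
  shows "(\<Sum>j\<in>{1..r}. \<Sum>m\<in>{1..n j}. c j m * (if ee j m = ee i k then 1 else 0)) = c i k"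
proof -
  have "(\<Sum>j\<in>{1..r}. \<Sum>m\<in>{1..n j}. c j m * (if ee j m = ee i k then 1 else 0))
      = (\<Sum>j\<in>{1..r}. if j = i then c i k else 0)"
  proof (rule sum.cong[OF refl])
    fix j assume j: "j \<in> {1..r}"
    have "(\<Sum>m\<in>{1..n j}. c j m * (if ee j m = ee i k then 1 else 0)) = (\<Sum>m\<in>{1..n j}. if j = i \<and> m = k then c j m else 0)"
    proof (rule sum.cong[OF refl])
      fix m assume m: "m \<in> {1..n j}"
      show "c j m * (if ee j m = ee i k then 1 else 0) = (if j = i \<and> m = k then c j m else 0)"
        using ee_inj[OF j m i k] by simp
    qed
    also have "\<dots> = (if j = i then c i k else 0)" using k by (cases "j = i") (auto simp: sum.delta')
    finally show "(\<Sum>m\<in>{1..n j}. c j m * (if ee j m = ee i k then 1 else 0)) = (if j = i then c i k else 0)" .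
  qed
  also have "\<dots> = c i k" using i by (simp add: sum.delta')
  finally show ?thesis .
qed

lemma Bf_delta:
  assumes i: "i \<in> {1..r}" and k: "k \<in> {1..n i}" and j: "j \<in> {1..r}" and l: "l \<in> {1..n j}"
  shows "Bf f g (\<lambda>a. if a = ee i k then 1 else 0) (\<lambda>a. if a = ee j l then 1 else 0) = Lmat d f g i k j l"
proof -
  have "Bf f g (\<lambda>a. if a = ee i k then 1 else 0) (\<lambda>a. if a = ee j l then 1 else 0)
     = (\<Sum>i'\<in>{1..r}. \<Sum>k'\<in>{1..n i'}. (\<Sum>j'\<in>{1..r}. \<Sum>l'\<in>{1..n j'}. Lmat d f g i' k' j' l' * (if ee j' l' = ee j l then 1 else 0)) * (if ee i' k' = ee i k then 1 else 0))"
    unfolding Bf_def by (intro sum.cong refl) (auto simp: sum_distrib_right)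
  also have "\<dots> = (\<Sum>i'\<in>{1..r}. \<Sum>k'\<in>{1..n i'}. Lmat d f g i' k' j l * (if ee i' k' = ee i k then 1 else 0))"
    by (intro sum.cong refl, subst sum_ee'[OF j l], rule refl)
  also have "\<dots> = Lmat d f g i k j l" by (rule sum_ee'[OF i k])
  finally show ?thesis .
qed

end


theorem theorem3p9:
  fixes r :: nat and n d :: "nat \<Rightarrow> nat"
    and f :: "nat \<Rightarrow> nat \<Rightarrow> nat \<Rightarrow> real"
    and g :: "nat \<Rightarrow> nat \<Rightarrow> nat \<Rightarrow> nat \<Rightarrow> real"
    and P F :: tvec
  assumes "1 \<le> r"
    and "\<forall>i\<in>{1..r}. 1 \<le> n i \<and> 1 \<le> d i"
    and "\<forall>i k l. f i k l = f i l k"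
    and "P \<in> Pspace r n d"
    and "F = (\<lambda>a. P a + (\<Sum>i\<in>{1..r}. Wcomp r n d f i a)
                     + (\<Sum>i\<in>{1..r}. \<Sum>j\<in>{i<..r}. Gcomp r n d g i j a))"
  shows "(\<exists>L. is_weingarten r n d (Epoint r n d) F L)
       \<and> (\<forall>L. is_weingarten r n d (Epoint r n d) F L \<longrightarrow>
            (\<forall>i\<in>{1..r}. \<forall>k\<in>{1..n i}. \<forall>j\<in>{1..r}. \<forall>l\<in>{1..n j}.
               ip r n d (tbasis r n d i k) (L (tbasis r n d j l)) = Lmat d f g i k j l))
       \<and> (\<forall>L. is_weingarten r n d (Epoint r n d) P L \<longrightarrow>
            (\<forall>w\<in>tangent r n d (Epoint r n d). L w = (\<lambda>_. 0)))"
proof -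
  interpret SVL r n d using assms(2) by unfold_locales auto
  note sym = assms(3) and Pp = assms(4) and Fd = assms(5)
  have ipF: "ip r n d D F = Bf f g v w" if ad: "adm v w \<gamma> V D" for v w \<gamma> V D
    unfolding Fd by (rule ipDF[OF ad Pp sym])
  define Lf where "Lf w = (\<lambda>a. \<Sum>i\<in>{1..r}. \<Sum>k\<in>{1..n i}.
      (\<Sum>j\<in>{1..r}. \<Sum>l\<in>{1..n j}. Lmat d f g i k j l * w (ee j l)) * (if a = ee i k then 1 else 0))" for w :: tvec
  have part1: "is_weingarten r n d E F Lf"
    unfolding is_weingarten_def
  proof (intro ballI conjI allI impI)
    fix w assume w: "w \<in> tangent r n d E"
    show "Lf w \<in> tangent r n d E" unfolding Lf_def by (rule span_tangent)
    fix v V \<gamma> D assume v: "v \<in> tangent r n d E"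
      and h: "\<gamma> 0 = E \<and> (\<forall>\<^sub>F t in nhds 0. \<gamma> t \<in> SV r n d) \<and> curve_deriv r n d \<gamma> w \<and>
           V E = v \<and> (\<forall>\<^sub>F t in nhds 0. V (\<gamma> t) \<in> tangent r n d (\<gamma> t)) \<and>
           curve_deriv r n d (\<lambda>t. V (\<gamma> t)) D"
    have ad: "adm v w \<gamma> V D" using w v h unfolding adm_def by auto
    have "ip r n d v (Lf w) = (\<Sum>i\<in>{1..r}. \<Sum>k\<in>{1..n i}. ip r n d v (\<lambda>a.
        (\<Sum>j\<in>{1..r}. \<Sum>l\<in>{1..n j}. Lmat d f g i k j l * w (ee j l)) * (if a = ee i k then 1 else 0)))"
      unfolding Lf_def by (simp add: ip_sum)
    also have "\<dots> = (\<Sum>i\<in>{1..r}. \<Sum>k\<in>{1..n i}. (\<Sum>j\<in>{1..r}. \<Sum>l\<in>{1..n j}. Lmat d f g i k j l * w (ee j l)) * v (ee i k))"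
      by (intro sum.cong refl) (simp add: ip_cdelta ee_T)
    also have "\<dots> = Bf f g v w" unfolding Bf_def
      by (intro sum.cong refl) (simp add: sum_distrib_left sum_distrib_right mult_ac)
    finally show "ip r n d v (Lf w) = ip r n d D F" using ipF[OF ad] by simp
  qed
  have part2: "\<forall>L. is_weingarten r n d E F L \<longrightarrow>
            (\<forall>i\<in>{1..r}. \<forall>k\<in>{1..n i}. \<forall>j\<in>{1..r}. \<forall>l\<in>{1..n j}.
               ip r n d (tbasis r n d i k) (L (tbasis r n d j l)) = Lmat d f g i k j l)"
  proof (intro allI impI ballI)
    fix L i k j l assume L: "is_weingarten r n d E F L" and i: "i \<in> {1..r}" and k: "k \<in> {1..n i}"
      and j: "j \<in> {1..r}" and l: "l \<in> {1..n j}"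
    have wt: "(\<lambda>a. if a = ee j l then 1 else 0) \<in> tangent r n d E" by (rule tbasis_tangent[OF j l])
    have vt: "(\<lambda>a. if a = ee i k then 1 else 0) \<in> tangent r n d E" by (rule tbasis_tangent[OF i k])
    obtain \<gamma> V D where ad: "adm (\<lambda>a. if a = ee i k then 1 else 0) (\<lambda>a. if a = ee j l then 1 else 0) \<gamma> V D"
      using adm_exists[OF i k wt] by blast
    have "ip r n d (\<lambda>a. if a = ee i k then 1 else 0) (L (\<lambda>a. if a = ee j l then 1 else 0)) = ip r n d D F"
      using L wt vt ad unfolding is_weingarten_def adm_def by blast
    also have "\<dots> = Lmat d f g i k j l" using ipF[OF ad] Bf_delta[OF i k j l] by simp
    finally show "ip r n d (tbasis r n d i k) (L (tbasis r n d j l)) = Lmat d f g i k j l"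
      using tbasis_eq[OF i k] tbasis_eq[OF j l] by simp
  qed
  have part3: "\<forall>L. is_weingarten r n d E P L \<longrightarrow> (\<forall>w\<in>tangent r n d E. L w = (\<lambda>_. 0))"
  proof (intro allI impI ballI)
    fix L w assume L: "is_weingarten r n d E P L" and w: "w \<in> tangent r n d E"
    have Lw: "L w \<in> tangent r n d E" using L w unfolding is_weingarten_def by blast
    have z: "L w (ee i k) = 0" if i: "i \<in> {1..r}" and k: "k \<in> {1..n i}" for i k
    proof -
      have vt: "(\<lambda>a. if a = ee i k then 1 else 0) \<in> tangent r n d E" by (rule tbasis_tangent[OF i k])
      obtain \<gamma> V D where ad: "adm (\<lambda>a. if a = ee i k then 1 else 0) w \<gamma> V D"
        using adm_exists[OF i k w] by blast
      have "ip r n d (\<lambda>a. if a = ee i k then 1 else 0) (L w) = ip r n d D P"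
        using L w vt ad unfolding is_weingarten_def adm_def by blast
      also have "\<dots> = 0" by (rule ipDP[OF ad Pp])
      finally show ?thesis using ip_delta'[OF ee_T[OF i k]] by simp
    qed
    show "L w = (\<lambda>_. 0)"
    proof
      fix a show "L w a = 0"
      proof (cases "a \<in> EE")
        case True then show ?thesis using z unfolding EE_def by blast
      next
        case False then show ?thesis by (rule tangentE_supp[OF Lw])
      qed
    qed
  qed
  show ?thesis using part1 part2 part3 by blast
qed


end
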